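(* Let $p\in\{2,3\}$ and let $\alpha=\frac{P+\sqrt D}{Q}\in\mathbb{Q}_p$, where $P,Q\in\mathbb{Z}$, $Q\neq0$, and $D$ is a non-square integer with $\sqrt D\in\mathbb{Q}_p$ (so $\alpha$ is a quadratic irrational). Then both Algorithm A and Algorithm B (defined in the context) expand $\alpha$ as an ultimately periodic continued fraction, i.e. there exist $N\ge0$ and $k\ge1$ with $b_{n+k}=b_n$ for all $n\ge N$.
   Context: Fix a prime $p$. Let $\mathcal{R}=\{-\frac{p-1}{2},\dots,0,\dots,\frac{p-1}{2}\}$ if $p$ is odd, and $\mathcal{R}=\{0,1\}$ if $p=2$. Every nonzero $\alpha\in\mathbb{Q}_p$ is written uniquely as $\alpha=\sum_{n\ge r}a_np^n$ with $r=v_p(\alpha)$, all $a_n\in\mathcal{R}$, $a_r\neq 0$. Put $s(\alpha)=\sum_{n=r}^{0}a_np^n$ and $t(\alpha)=\sum_{n=r}^{-1}a_np^n$ (empty sums are $0$). For an algebraic number $\alpha\in\mathbb{Q}_p$ whose minimal polynomial over $\mathbb{Q}$ has degree $d$, let $\operatorname{Tr}(\alpha)$ be its trace over $\mathbb{Q}$ and $\operatorname{round}(x)$ the integer nearest to the real number $x$. Define $\bar s(\alpha)=\operatorname{round}\!\left(\frac{\operatorname{Tr}(\alpha)/d-s(\alpha)}{p}\right)p+s(\alpha)$ and $\bar t(\alpha)=\operatorname{round}\!\left(\operatorname{Tr}(\alpha)/d-t(\alpha)\right)+t(\alpha)$. (For $\alpha=\frac{P+\sqrt D}{Q}$ as in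 the claim, $\operatorname{Tr}(\alpha)/d=P/Q$.) An expansion algorithm starts with $\alpha_0=\alpha$; at step $n$ it chooses $b_n$ by a rule; if $\alpha_n=b_n$ it stops, otherwise it sets $\alpha_{n+1}=\frac{1}{\alpha_n-b_n}$ and continues, producing $[b_0,b_1,\dots]=b_0+\cfrac{1}{b_1+\cfrac{1}{b_2+\cdots}}$. Algorithm A: $b_0=\bar s(\alpha_0)$; for $n\ge1$, $b_n=\bar s(\alpha_n)$ if $v_p(\alpha_n)=0$ and $b_n=\bar t(\alpha_n)$ if $v_p(\alpha_n)<0$. Algorithm B: $b_n=\bar s(\alpha_n)$ if $n$ is even and $b_n=\bar t(\alpha_n)$ if $n$ is odd. *)

theory Defs
  imports Complex_Main "HOL-Computational_Algebra.Primes"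
begin

definition pval :: "nat \<Rightarrow> rat \<Rightarrow> int" where
  "pval p x = (case quotient_of x of (n, d) \<Rightarrow>
      int (multiplicity (int p) n) - int (multiplicity (int p) d))"

definition pdiv_ge :: "nat \<Rightarrow> int \<Rightarrow> rat \<Rightarrow> bool" where
  "pdiv_ge p N x \<longleftrightarrow> x = 0 \<or> pval p x \<ge> N"

definition padic_cauchy :: "nat \<Rightarrow> (nat \<Rightarrow> rat) \<Rightarrow> bool" where
  "padic_cauchy p A \<longleftrightarrow> (\<forall>N. \<exists>M. \<forall>m\<ge>M. \<forall>n\<ge>M. pdiv_ge p N (A m - A n))"

definition padic_tendsto :: "nat \<Rightarrow> (nat \<Rightarrow> rat) \<Rightarrow> rat \<Rightarrow> bool" where
  "padic_tendsto p A q \<longleftrightarrow> (\<forall>N. \<forall>\<^sub>F m in sequentially. pdiv_ge p N (A m - q))"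

text \<open>For the p-adic number x = lim A: v_p(x - q) >= N.\<close>
definition padic_close :: "nat \<Rightarrow> (nat \<Rightarrow> rat) \<Rightarrow> rat \<Rightarrow> int \<Rightarrow> bool" where
  "padic_close p A q N \<longleftrightarrow> (\<forall>\<^sub>F m in sequentially. pdiv_ge p N (A m - q))"

definition digit_set :: "nat \<Rightarrow> int set" where
  "digit_set p = (if p = 2 then {0, 1} else {- ((int p - 1) div 2) .. (int p - 1) div 2})"

text \<open>a is the digit sequence of x = lim A (x nonzero), r = v_p(x):
  x = sum_{n>=r} a_n p^n with a_n in the digit set, a_r nonzero.\<close>
definition is_digit_exp :: "nat \<Rightarrow> (nat \<Rightarrow> rat) \<Rightarrow> (int \<Rightarrow> int) \<Rightarrow> int \<Rightarrow> bool" where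
  "is_digit_exp p A a r \<longleftrightarrow>
     (\<forall>n. a n \<in> digit_set p) \<and> (\<forall>n<r. a n = 0) \<and> a r \<noteq> 0 \<and>
     (\<forall>N\<ge>r. padic_close p A (\<Sum>n\<in>{r..<N}. of_int (a n) * (of_nat p :: rat) powi n) N)"

definition padic_val :: "nat \<Rightarrow> (nat \<Rightarrow> rat) \<Rightarrow> int" where
  "padic_val p A = (THE r. \<exists>a. is_digit_exp p A a r)"

definition padic_digits :: "nat \<Rightarrow> (nat \<Rightarrow> rat) \<Rightarrow> int \<Rightarrow> int" where
  "padic_digits p A = (THE a. \<exists>r. is_digit_exp p A a r)"

definition padic_s :: "nat \<Rightarrow> (nat \<Rightarrow> rat) \<Rightarrow> rat" where
  "padic_s p A = (\<Sum>n\<in>{padic_val p A..0}. of_int (padic_digits p A n) * (of_nat p :: rat) powi n)"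

definition padic_t :: "nat \<Rightarrow> (nat \<Rightarrow> rat) \<Rightarrow> rat" where
  "padic_t p A = (\<Sum>n\<in>{padic_val p A..-1}. of_int (padic_digits p A n) * (of_nat p :: rat) powi n)"

text \<open>A pair (a, b) represents a + b sqrt D. The embedding into Q_p is fixed by a
  p-adic Cauchy sequence r of rationals converging to a square root of D.\<close>

type_synonym qsqrt = "rat \<times> rat"

definition qs_inv :: "int \<Rightarrow> qsqrt \<Rightarrow> qsqrt" where
  "qs_inv D x = (let (a, b) = x; n = a^2 - of_int D * b^2 in (a / n, - b / n))"

definition qs_sub_rat :: "qsqrt \<Rightarrow> rat \<Rightarrow> qsqrt" where
  "qs_sub_rat x c = (fst x - c, snd x)"

definition qs_approx :: "(nat \<Rightarrow> rat) \<Rightarrow> qsqrt \<Rightarrow> nat \<Rightarrow> rat" where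
  "qs_approx r x = (\<lambda>m. fst x + snd x * r m)"

text \<open>Tr(x)/d for x = a + b sqrt D (D non-square) is a.\<close>
definition qs_trace_avg :: "qsqrt \<Rightarrow> rat" where
  "qs_trace_avg x = fst x"

definition s_bar :: "nat \<Rightarrow> (nat \<Rightarrow> rat) \<Rightarrow> qsqrt \<Rightarrow> rat" where
  "s_bar p r x = (let s = padic_s p (qs_approx r x) in
     of_int (round ((qs_trace_avg x - s) / of_nat p)) * of_nat p + s)"

definition t_bar :: "nat \<Rightarrow> (nat \<Rightarrow> rat) \<Rightarrow> qsqrt \<Rightarrow> rat" where
  "t_bar p r x = (let t = padic_t p (qs_approx r x) in
     of_int (round (qs_trace_avg x - t)) + t)"

definition ruleA :: "nat \<Rightarrow> (nat \<Rightarrow> rat) \<Rightarrow> nat \<Rightarrow> qsqrt \<Rightarrow> rat" where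
  "ruleA p r n x = (if n = 0 then s_bar p r x
     else if padic_val p (qs_approx r x) = 0 then s_bar p r x
     else if padic_val p (qs_approx r x) < 0 then t_bar p r x
     else undefined)"

definition ruleB :: "nat \<Rightarrow> (nat \<Rightarrow> rat) \<Rightarrow> nat \<Rightarrow> qsqrt \<Rightarrow> rat" where
  "ruleB p r n x = (if even n then s_bar p r x else t_bar p r x)"

text \<open>The sequence alpha_n (ignoring termination; termination at step n means
  alpha_n = b_n, i.e. alpha_n = (b_n, 0)).\<close>
fun cf_alpha :: "int \<Rightarrow> (nat \<Rightarrow> qsqrt \<Rightarrow> rat) \<Rightarrow> qsqrt \<Rightarrow> nat \<Rightarrow> qsqrt" where
  "cf_alpha D rule x 0 = x"
| "cf_alpha D rule x (Suc n) =
     (let y = cf_alpha D rule x n in qs_inv D (qs_sub_rat y (rule n y)))"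

definition cf_b :: "int \<Rightarrow> (nat \<Rightarrow> qsqrt \<Rightarrow> rat) \<Rightarrow> qsqrt \<Rightarrow> nat \<Rightarrow> rat" where
  "cf_b D rule x n = rule n (cf_alpha D rule x n)"

definition cf_ult_periodic :: "int \<Rightarrow> (nat \<Rightarrow> qsqrt \<Rightarrow> rat) \<Rightarrow> qsqrt \<Rightarrow> bool" where
  "cf_ult_periodic D rule x \<longleftrightarrow>
     (\<forall>n. cf_alpha D rule x n \<noteq> (cf_b D rule x n, 0)) \<and>
     (\<exists>N k. k \<ge> 1 \<and> (\<forall>n\<ge>N. cf_b D rule x (n + k) = cf_b D rule x n))"

end

theory Submission
  imports Defs
begin


lemma pval_frac:
  assumes p: "prime p" and u: "u \<noteq> 0" and w: "w \<noteq> 0"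
  shows "pval p (of_int u / of_int w) = int (multiplicity (int p) u) - int (multiplicity (int p) w)"
proof -
  obtain n d where q: "quotient_of (of_int u / of_int w) = (n, d)" by (cases "quotient_of (of_int u / of_int w :: rat)")
  have d: "d > 0" using q quotient_of_denom_pos by blast
  have e: "(of_int u / of_int w :: rat) = of_int n / of_int d" using quotient_of_div[OF q] .
  have n: "n \<noteq> 0" using e u w d by auto
  have "of_int (u * d) = (of_int (n * w) :: rat)" using e w d by (simp add: field_simps)
  hence ud: "u * d = n * w" by (simp only: of_int_eq_iff)
  have pe: "prime_elem (int p)" using p by simp
  have "multiplicity (int p) (u * d) = multiplicity (int p) (n * w)" using ud by simp
  hence "multiplicity (int p) u + multiplicity (int p) d = multiplicity (int p) n + multiplicity (int p) w"
    using prime_elem_multiplicity_mult_distrib[OF pe] u w n d by (metis less_irrefl)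
  thus ?thesis unfolding pval_def q by simp
qed

lemma pval_mult:
  assumes p: "prime p" and x: "x \<noteq> 0" and y: "y \<noteq> 0"
  shows "pval p (x * y) = pval p x + pval p y"
proof -
  obtain n1 d1 where q1: "quotient_of x = (n1, d1)" by (cases "quotient_of x")
  obtain n2 d2 where q2: "quotient_of y = (n2, d2)" by (cases "quotient_of y")
  have d1: "d1 > 0" using q1 quotient_of_denom_pos by blast
  have d2: "d2 > 0" using q2 quotient_of_denom_pos by blast
  have ex: "x = of_int n1 / of_int d1" using quotient_of_div[OF q1] .
  have ey: "y = of_int n2 / of_int d2" using quotient_of_div[OF q2] .
  have n1: "n1 \<noteq> 0" using ex x by auto
  have n2: "n2 \<noteq> 0" using ey y by auto
  have pe: "prime_elem (int p)" using p by simp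
  have "x * y = of_int (n1 * n2) / of_int (d1 * d2)" using ex ey by simp
  hence "pval p (x * y) = int (multiplicity (int p) (n1 * n2)) - int (multiplicity (int p) (d1 * d2))"
    using pval_frac[OF p, of "n1*n2" "d1*d2"] n1 n2 d1 d2 by (simp del: of_int_mult)
  also have "\<dots> = pval p x + pval p y"
    using prime_elem_multiplicity_mult_distrib[OF pe] n1 n2 d1 d2
    unfolding pval_def q1 q2 by simp
  finally show ?thesis .
qed

lemma pval_int:
  assumes p: "prime p" and z: "z \<noteq> 0"
  shows "pval p (of_int z) = int (multiplicity (int p) z)"
  using pval_frac[OF p z, of 1] by simp

lemma pval_pow:
  assumes p: "prime p"
  shows "pval p ((of_nat p) powi k) = k"
proof (cases "k \<ge> 0")
  case True
  have "(of_nat p :: rat) powi k = of_int (int p ^ nat k)" using True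
    by (simp add: power_int_def)
  moreover have "int p ^ nat k \<noteq> 0" using p by (simp add: prime_gt_0_nat)
  ultimately show ?thesis using pval_int[OF p, of "int p ^ nat k"] True p
    by (simp del: of_int_power)
next
  case False
  have "(of_nat p :: rat) powi k = of_int 1 / of_int (int p ^ nat (-k))" using False
    by (simp add: power_int_def field_simps)
  moreover have "int p ^ nat (-k) \<noteq> 0" using p by (simp add: prime_gt_0_nat)
  ultimately show ?thesis using pval_frac[OF p, of 1 "int p ^ nat (-k)"] False p
    by (simp del: of_int_power)
qed



lemma powi_nonneg_eq: "k \<ge> 0 \<Longrightarrow> (x::rat) powi k = x ^ nat k"
  by (simp add: power_int_def)

lemma pdiv_ge_char:
  assumes p: "prime p"
  shows "pdiv_ge p N x \<longleftrightarrow> (\<exists>u w. \<not> int p dvd w \<and> x = of_int u * of_nat p powi N / of_int w)"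
proof
  assume h: "pdiv_ge p N x"
  show "\<exists>u w. \<not> int p dvd w \<and> x = of_int u * of_nat p powi N / of_int w"
  proof (cases "x = 0")
    case True
    thus ?thesis by (intro exI[of _ 0] exI[of _ 1]) (use p in \<open>auto simp: prime_gt_1_nat\<close>)
  next
    case False
    hence v: "pval p x \<ge> N" using h unfolding pdiv_ge_def by auto
    obtain n d where q: "quotient_of x = (n, d)" by (cases "quotient_of x")
    have d: "d > 0" using q quotient_of_denom_pos by blast
    have ex: "x = of_int n / of_int d" using quotient_of_div[OF q] .
    have n0: "n \<noteq> 0" using ex False by auto
    have nu: "\<not> is_unit (int p)" using p prime_gt_1_nat by fastforce
    obtain n' where n': "n = int p ^ multiplicity (int p) n * n'" "\<not> int p dvd n'"
      using multiplicity_decompose'[of n "int p"] n0 nu by blast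
    obtain d' where d': "d = int p ^ multiplicity (int p) d * d'" "\<not> int p dvd d'"
      using multiplicity_decompose'[of d "int p"] d nu by (metis less_irrefl)
    define i where "i = multiplicity (int p) n"
    define j where "j = multiplicity (int p) d"
    have vij: "pval p x = int i - int j" unfolding pval_def q i_def j_def by simp
    have pp: "(of_nat p :: rat) \<noteq> 0" using p by (simp add: prime_gt_0_nat)
    have e1: "(of_nat p :: rat) powi N * of_nat p ^ nat (int i - int j - N) = of_nat p ^ i / of_nat p ^ j"
    proof -
      have "(of_nat p :: rat) powi N * of_nat p ^ nat (int i - int j - N) = of_nat p powi N * of_nat p powi (int i - int j - N)"
        using v vij by (simp add: power_int_def)
      also have "\<dots> = of_nat p powi (int i - int j)" using pp by (simp add: power_int_add[symmetric])
      also have "\<dots> = of_nat p ^ i / of_nat p ^ j" using pp by (simp add: power_int_diff)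
      finally show ?thesis .
    qed
    have "x = of_int (n' * int p ^ nat (int i - int j - N)) * of_nat p powi N / of_int d'"
    proof -
      have "x = of_int n' * (of_nat p ^ i / of_nat p ^ j) / of_int d'"
        using ex n'(1) d'(1) unfolding i_def[symmetric] j_def[symmetric] using pp by simp
      also have "\<dots> = of_int (n' * int p ^ nat (int i - int j - N)) * of_nat p powi N / of_int d'"
        using e1 by (simp add: mult.commute mult.left_commute mult.assoc)
      finally show ?thesis .
    qed
    thus ?thesis using d' by blast
  qed
next
  assume "\<exists>u w. \<not> int p dvd w \<and> x = of_int u * of_nat p powi N / of_int w"
  then obtain u w where w: "\<not> int p dvd w" and x: "x = of_int u * of_nat p powi N / of_int w" by blast
  show "pdiv_ge p N x"
  proof (cases "u = 0")
    case True thus ?thesis using x unfolding pdiv_ge_def by simp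
  next
    case False
    have w0: "w \<noteq> 0" using w by auto
    have pp: "(of_nat p :: rat) \<noteq> 0" using p by (simp add: prime_gt_0_nat)
    have x2: "x = (of_int u / of_int w) * of_nat p powi N" using x by simp
    have "pval p x = pval p (of_int u / of_int w) + pval p (of_nat p powi N)"
      unfolding x2 by (rule pval_mult[OF p]) (use False w0 pp in auto)
    also have "\<dots> = int (multiplicity (int p) u) + N"
      using pval_frac[OF p False w0] pval_pow[OF p] not_dvd_imp_multiplicity_0[OF w] by simp
    finally show ?thesis unfolding pdiv_ge_def by simp
  qed
qed



lemma prime_int_p: "prime p \<Longrightarrow> prime (int p)" by simp

lemma pge_zero[simp]: "pdiv_ge p N 0" unfolding pdiv_ge_def by simp

lemma pge_add:
  assumes p: "prime p" and x: "pdiv_ge p N x" and y: "pdiv_ge p N y"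
  shows "pdiv_ge p N (x + y)"
proof -
  obtain u1 w1 where 1: "\<not> int p dvd w1" "x = of_int u1 * of_nat p powi N / of_int w1"
    using x pdiv_ge_char[OF p] by blast
  obtain u2 w2 where 2: "\<not> int p dvd w2" "y = of_int u2 * of_nat p powi N / of_int w2"
    using y pdiv_ge_char[OF p] by blast
  have w: "\<not> int p dvd (w1 * w2)" using 1 2 prime_int_p[OF p] prime_dvd_mult_iff by blast
  have "x + y = of_int (u1 * w2 + u2 * w1) * of_nat p powi N / of_int (w1 * w2)"
  proof -
    have "w1 \<noteq> 0" "w2 \<noteq> 0" using 1 2 by auto
    thus ?thesis using 1 2 by (simp add: field_simps)
  qed
  thus ?thesis using w pdiv_ge_char[OF p] by blast
qed

lemma pge_uminus:
  assumes p: "prime p" and x: "pdiv_ge p N x"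
  shows "pdiv_ge p N (- x)"
proof -
  obtain u1 w1 where 1: "\<not> int p dvd w1" "x = of_int u1 * of_nat p powi N / of_int w1"
    using x pdiv_ge_char[OF p] by blast
  have "- x = of_int (- u1) * of_nat p powi N / of_int w1" using 1 by simp
  thus ?thesis using 1 pdiv_ge_char[OF p] by blast
qed

lemma pge_diff:
  assumes p: "prime p" and x: "pdiv_ge p N x" and y: "pdiv_ge p N y"
  shows "pdiv_ge p N (x - y)"
  using pge_add[OF p x pge_uminus[OF p y]] by simp

lemma pge_mult:
  assumes p: "prime p" and x: "pdiv_ge p N x" and y: "pdiv_ge p M y"
  shows "pdiv_ge p (N + M) (x * y)"
proof -
  obtain u1 w1 where 1: "\<not> int p dvd w1" "x = of_int u1 * of_nat p powi N / of_int w1"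
    using x pdiv_ge_char[OF p] by blast
  obtain u2 w2 where 2: "\<not> int p dvd w2" "y = of_int u2 * of_nat p powi M / of_int w2"
    using y pdiv_ge_char[OF p] by blast
  have w: "\<not> int p dvd (w1 * w2)" using 1 2 prime_int_p[OF p] prime_dvd_mult_iff by blast
  have pp: "(of_nat p :: rat) \<noteq> 0" using p by (simp add: prime_gt_0_nat)
  have "x * y = of_int (u1 * u2) * of_nat p powi (N + M) / of_int (w1 * w2)"
    using 1 2 pp by (simp add: power_int_add)
  thus ?thesis using w pdiv_ge_char[OF p] by blast
qed

lemma pge_mono:
  assumes "pdiv_ge p N x" "M \<le> N"
  shows "pdiv_ge p M x"
  using assms unfolding pdiv_ge_def by auto

lemma pge_int:
  assumes p: "prime p"
  shows "pdiv_ge p 0 (of_int z)"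
proof -
  have "(of_int z :: rat) = of_int z * of_nat p powi 0 / of_int 1" by simp
  moreover have "\<not> int p dvd 1" using p prime_gt_1_nat by fastforce
  ultimately show ?thesis using pdiv_ge_char[OF p] by blast
qed

lemma pge_pow:
  assumes p: "prime p"
  shows "pdiv_ge p k (of_nat p powi k)"
  using pval_pow[OF p] unfolding pdiv_ge_def by simp

lemma pge_self:
  assumes "x \<noteq> 0" shows "pdiv_ge p (pval p x) x"
  unfolding pdiv_ge_def by simp

lemma pge_pow_mult:
  assumes p: "prime p"
  shows "pdiv_ge p N (of_nat p powi k * x) \<longleftrightarrow> pdiv_ge p (N - k) x"
proof
  have pp: "(of_nat p :: rat) \<noteq> 0" using p by (simp add: prime_gt_0_nat)
  {
    assume "pdiv_ge p N (of_nat p powi k * x)"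
    from pge_mult[OF p this pge_pow[OF p, of "-k"]]
    moreover have "(of_nat p :: rat) powi k \<noteq> 0" using pp by simp
    moreover have "inverse ((of_nat p :: rat) powi k) * (x * of_nat p powi k) = x"
      using calculation(2) by (simp add: field_simps)
    ultimately show "pdiv_ge p (N - k) x" by (simp add: power_int_minus mult.commute)
  }
  {
    assume "pdiv_ge p (N - k) x"
    from pge_mult[OF p pge_pow[OF p, of k] this]
    show "pdiv_ge p N (of_nat p powi k * x)" by simp
  }
qed

lemma pge_all_zero:
  assumes "\<forall>N. pdiv_ge p N x" shows "x = 0"
proof (rule ccontr)
  assume "x \<noteq> 0"
  with assms[rule_format, of "pval p x + 1"] show False unfolding pdiv_ge_def by simp
qed

lemma pge_int_dvd:
  assumes p: "prime p" and h: "pdiv_ge p 1 (of_int z)"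
  shows "int p dvd z"
proof -
  obtain u w where 1: "\<not> int p dvd w" "(of_int z :: rat) = of_int u * of_nat p powi 1 / of_int w"
    using h pdiv_ge_char[OF p] by blast
  have w0: "w \<noteq> 0" using 1 by auto
  have "(of_int (z * w) :: rat) = of_int (u * int p)" using 1 w0 by (simp add: field_simps)
  hence "z * w = u * int p" by (simp only: of_int_eq_iff)
  hence "int p dvd z * w" by simp
  thus ?thesis using 1 prime_int_p[OF p] prime_dvd_mult_iff by blast
qed

lemma pge_Zp_int:
  assumes p: "prime p" and h: "pdiv_ge p 0 (of_int z / of_nat p ^ j)"
  shows "int p ^ j dvd z"
proof -
  obtain u w where 1: "\<not> int p dvd w" "(of_int z / of_nat p ^ j :: rat) = of_int u * of_nat p powi 0 / of_int w"
    using h pdiv_ge_char[OF p] by blast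
  have w0: "w \<noteq> 0" using 1 by auto
  have pp: "(of_nat p :: rat) \<noteq> 0" using p by (simp add: prime_gt_0_nat)
  have "(of_int (z * w) :: rat) = of_int (u * int p ^ j)" using 1 w0 pp by (simp add: field_simps)
  hence "z * w = u * int p ^ j" by (simp only: of_int_eq_iff)
  hence "int p ^ j dvd z * w" by simp
  moreover have "coprime (int p ^ j) w"
    using 1 prime_int_p[OF p] by (simp add: prime_imp_coprime)
  ultimately show ?thesis using coprime_dvd_mult_left_iff by blast
qed

lemma pval_strict:
  assumes p: "prime p" and x: "x \<noteq> 0" and y: "pdiv_ge p (pval p x + 1) y"
  shows "x + y \<noteq> 0 \<and> pval p (x + y) = pval p x"
proof -
  have a: "pdiv_ge p (pval p x) (x + y)"
    using pge_add[OF p pge_self[OF x] pge_mono[OF y]] by simp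
  have b: "\<not> pdiv_ge p (pval p x + 1) (x + y)"
  proof
    assume "pdiv_ge p (pval p x + 1) (x + y)"
    from pge_diff[OF p this y] have "pdiv_ge p (pval p x + 1) x" by simp
    thus False using x unfolding pdiv_ge_def by simp
  qed
  from a b show ?thesis unfolding pdiv_ge_def by auto
qed

lemma pge_div:
  assumes p: "prime p" and y: "y \<noteq> 0" and h: "pdiv_ge p N (x * y)"
  shows "pdiv_ge p (N - pval p y) x"
proof (cases "x = 0")
  case True thus ?thesis by simp
next
  case False
  have "pval p (x * y) = pval p x + pval p y" using pval_mult[OF p False y] .
  moreover have "x * y \<noteq> 0" using False y by simp
  ultimately show ?thesis using h unfolding pdiv_ge_def by auto
qed

lemma pge_scale:
  assumes p: "prime p" and b: "b \<noteq> 0" and h: "pdiv_ge p (N - pval p b) x"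
  shows "pdiv_ge p N (b * x)"
  using pge_mult[OF p pge_self[OF b] h] by simp



definition canon :: "nat \<Rightarrow> int \<Rightarrow> int" where
  "canon p z = (if p = 2 then z mod 2 else (z + 1) mod 3 - 1)"

definition d0 :: "nat \<Rightarrow> rat \<Rightarrow> int" where
  "d0 p y = (case quotient_of y of (n, d) \<Rightarrow> canon p (n * d))"

fun digs :: "nat \<Rightarrow> rat \<Rightarrow> nat \<Rightarrow> int" where
  "digs p y 0 = d0 p y"
| "digs p y (Suc k) = digs p ((y - of_int (d0 p y)) / of_nat p) k"

lemma pge_p_mult:
  assumes "prime p"
  shows "pdiv_ge p N (of_nat p * x) \<longleftrightarrow> pdiv_ge p (N - 1) x"
  using pge_pow_mult[OF assms, of N 1 x] by simp

lemma p23_prime: "(p::nat) = 2 \<or> p = 3 \<Longrightarrow> prime p" by auto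

lemma digit_set_23: "digit_set 2 = {0, 1}" "digit_set 3 = {-1, 0, 1}"
  unfolding digit_set_def by auto

lemma canon_in: "p = 2 \<or> p = 3 \<Longrightarrow> canon p z \<in> digit_set p"
  unfolding canon_def using digit_set_23 by auto

lemma canon_cong: "p = 2 \<or> p = 3 \<Longrightarrow> int p dvd (z - canon p z)"
proof -
  assume p: "p = 2 \<or> p = 3"
  show ?thesis
  proof (cases "p = 2")
    case True
    have "z - z mod 2 = 2 * (z div 2)" by (simp add: minus_mod_eq_mult_div)
    thus ?thesis using True unfolding canon_def by simp
  next
    case False
    hence p3: "p = 3" using p by simp
    have "z - ((z + 1) mod 3 - 1) = 3 * ((z + 1) div 3)"
      using minus_mod_eq_mult_div[of "z + 1" 3] by simp
    thus ?thesis using p3 unfolding canon_def by simp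
  qed
qed

lemma digit_eq:
  assumes p: "p = 2 \<or> p = 3" and a: "a \<in> digit_set p" and b: "b \<in> digit_set p"
    and d: "int p dvd (a - b)"
  shows "a = b"
proof (cases "p = 2")
  case True
  thus ?thesis using a b d digit_set_23 by auto
next
  case False
  hence p3: "p = 3" using p by simp
  thus ?thesis using a b d digit_set_23 by auto
qed

lemma sq_mod:
  assumes p: "p = 2 \<or> p = 3" and d: "\<not> int p dvd d"
  shows "int p dvd (1 - d * d)"
proof (cases "p = 2")
  case True
  hence od: "odd d" using d by simp
  define k where "k = d div 2"
  have dk: "d = 2 * k + 1" unfolding k_def using od by simp
  have "1 - d * d = 2 * (- 2 * k * k - 2 * k)" unfolding dk by (simp add: algebra_simps)
  thus ?thesis using True by simp
next
  case False
  hence p3: "p = 3" using p by simp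
  define k where "k = d div 3"
  have dm: "d = 3 * k + d mod 3" unfolding k_def by simp
  have "d mod 3 \<noteq> 0" using d p3 by (simp add: dvd_eq_mod_eq_0)
  moreover have "d mod 3 \<ge> 0" "d mod 3 < 3" by simp_all
  ultimately have "d mod 3 = 1 \<or> d mod 3 = 2" by linarith
  hence "d = 3 * k + 1 \<or> d = 3 * k + 2" using dm by metis
  hence "\<exists>e. 1 - d * d = 3 * e"
  proof
    assume "d = 3 * k + 1"
    hence "1 - d * d = 3 * (- 3 * k * k - 2 * k)" by (simp add: algebra_simps)
    thus ?thesis by blast
  next
    assume "d = 3 * k + 2"
    hence "1 - d * d = 3 * (- 3 * k * k - 4 * k - 1)" by (simp add: algebra_simps)
    thus ?thesis by blast
  qed
  then obtain e where e: "1 - d * d = 3 * e" by blast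
  show ?thesis unfolding e using p3 by simp
qed

lemma quot_den_not_dvd:
  assumes p: "prime p" and y: "pdiv_ge p 0 y" and q: "quotient_of y = (n, d)"
  shows "\<not> int p dvd d"
proof
  assume pd: "int p dvd d"
  have cop: "coprime n d" using quotient_of_coprime[OF q] .
  have pn: "\<not> int p dvd n"
  proof
    assume "int p dvd n"
    hence "is_unit (int p)" using coprime_common_divisor[OF cop _ pd] by blast
    moreover have "\<not> is_unit (int p)" using p prime_gt_1_nat by fastforce
    ultimately show False by blast
  qed
  have n0: "n \<noteq> 0" using pn by auto
  have d0: "d > 0" using quotient_of_denom_pos[OF q] .
  have m0: "multiplicity (int p) n = 0" using not_dvd_imp_multiplicity_0[OF pn] .
  have nu: "\<not> is_unit (int p)" using p prime_gt_1_nat by fastforce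
  have m1: "multiplicity (int p) d > 0" using multiplicity_gt_zero_iff[of d "int p"] pd d0 nu by simp
  have ey: "y = of_int n / of_int d" using quotient_of_div[OF q] .
  have "y \<noteq> 0" using ey n0 d0 by simp
  hence "pval p y \<ge> 0" using y unfolding pdiv_ge_def by simp
  thus False unfolding pval_def q using m0 m1 by simp
qed

lemma d0_prop:
  assumes p: "p = 2 \<or> p = 3" and y: "pdiv_ge p 0 y"
  shows "pdiv_ge p 1 (y - of_int (d0 p y))"
proof -
  have pr: "prime p" using p by auto
  obtain n d where q: "quotient_of y = (n, d)" by (cases "quotient_of y")
  have nd: "\<not> int p dvd d" using quot_den_not_dvd[OF pr y q] .
  have d0: "d > 0" using quotient_of_denom_pos[OF q] .
  have ey: "y = of_int n / of_int d" using quotient_of_div[OF q] .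
  define e where "e = canon p (n * d)"
  have de: "d0 p y = e" unfolding d0_def q e_def by simp
  have "int p dvd (n * d - e)" using canon_cong[OF p] unfolding e_def .
  moreover have "int p dvd n * (1 - d * d)" using sq_mod[OF p nd] by simp
  ultimately have "int p dvd (n * d - e) * d + n * (1 - d * d)" by simp
  moreover have "(n * d - e) * d + n * (1 - d * d) = n - e * d" by (simp add: algebra_simps)
  ultimately obtain m where m: "n - e * d = int p * m" by (metis dvdE)
  have "y - of_int (d0 p y) = of_int m * of_nat p powi 1 / of_int d"
  proof -
    have "y - of_int (d0 p y) = of_int (n - e * d) / of_int d" using ey de d0 by (simp add: field_simps)
    also have "\<dots> = of_int m * of_nat p powi 1 / of_int d" unfolding m by simp
    finally show ?thesis .
  qed
  thus ?thesis using nd pdiv_ge_char[OF pr] by blast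
qed

lemma d0_in: "p = 2 \<or> p = 3 \<Longrightarrow> d0 p y \<in> digit_set p"
  unfolding d0_def by (cases "quotient_of y") (simp add: canon_in)

lemma d0_unique:
  assumes p: "p = 2 \<or> p = 3" and y: "pdiv_ge p 0 y" and e: "e \<in> digit_set p"
    and h: "pdiv_ge p 1 (y - of_int e)"
  shows "e = d0 p y"
proof -
  have pr: "prime p" using p by auto
  have "pdiv_ge p 1 ((y - of_int (d0 p y)) - (y - of_int e))"
    using pge_diff[OF pr d0_prop[OF p y] h] .
  hence "pdiv_ge p 1 (of_int (e - d0 p y))" by simp
  hence "int p dvd (e - d0 p y)" using pge_int_dvd[OF pr] by blast
  thus ?thesis using digit_eq[OF p e d0_in[OF p]] by blast
qed

lemma d0_nonzero:
  assumes p: "p = 2 \<or> p = 3" and y: "pdiv_ge p 0 y" and y1: "\<not> pdiv_ge p 1 y"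
  shows "d0 p y \<noteq> 0"
  using d0_prop[OF p y] y1 by auto

lemma digs_in: "p = 2 \<or> p = 3 \<Longrightarrow> digs p y k \<in> digit_set p"
  by (induction k arbitrary: y) (auto simp: d0_in)

lemma shift_Zp:
  assumes p: "p = 2 \<or> p = 3" and y: "pdiv_ge p 0 y"
  shows "pdiv_ge p 0 ((y - of_int (d0 p y)) / of_nat p)"
proof -
  have pr: "prime p" using p by auto
  have pp: "(of_nat p :: rat) \<noteq> 0" using p by auto
  have "y - of_int (d0 p y) = of_nat p * ((y - of_int (d0 p y)) / of_nat p)" using pp by simp
  with d0_prop[OF p y] have "pdiv_ge p 1 (of_nat p * ((y - of_int (d0 p y)) / of_nat p))" by simp
  thus ?thesis using pge_p_mult[OF pr, of 1] by (simp del: times_divide_eq_right)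
qed

lemma digs_sum:
  assumes p: "p = 2 \<or> p = 3" and y: "pdiv_ge p 0 y"
  shows "pdiv_ge p (int K) (y - (\<Sum>k<K. of_int (digs p y k) * of_nat p ^ k))"
  using y
proof (induction K arbitrary: y)
  case 0 thus ?case by simp
next
  case (Suc K)
  have pr: "prime p" using p by auto
  have pp: "(of_nat p :: rat) \<noteq> 0" using p by auto
  define y' where "y' = (y - of_int (d0 p y)) / of_nat p"
  have y': "pdiv_ge p 0 y'" unfolding y'_def using shift_Zp[OF p Suc.prems] .
  have IH: "pdiv_ge p (int K) (y' - (\<Sum>k<K. of_int (digs p y' k) * of_nat p ^ k))" using Suc.IH[OF y'] .
  have "y - (\<Sum>k<Suc K. of_int (digs p y k) * of_nat p ^ k) =
        of_nat p * (y' - (\<Sum>k<K. of_int (digs p y' k) * of_nat p ^ k))"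
  proof -
    have "(\<Sum>k<Suc K. of_int (digs p y k) * (of_nat p :: rat) ^ k) =
          of_int (d0 p y) + (\<Sum>k<K. of_int (digs p y' k) * of_nat p ^ Suc k)"
      unfolding sum.lessThan_Suc_shift y'_def by simp
    also have "\<dots> = of_int (d0 p y) + of_nat p * (\<Sum>k<K. of_int (digs p y' k) * of_nat p ^ k)"
      by (simp add: sum_distrib_left algebra_simps)
    finally show ?thesis unfolding y'_def using pp by (simp add: field_simps)
  qed
  moreover have "pdiv_ge p (int (Suc K)) (of_nat p * (y' - (\<Sum>k<K. of_int (digs p y' k) * of_nat p ^ k)))"
    using IH pge_p_mult[OF pr] by simp
  ultimately show ?case by simp
qed

lemma digs_eq:
  assumes p: "p = 2 \<or> p = 3"
  shows "pdiv_ge p 0 y \<Longrightarrow> pdiv_ge p 0 y' \<Longrightarrow> pdiv_ge p (int K) (y - y') \<Longrightarrow> k < K \<Longrightarrow> digs p y k = digs p y' k"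
proof (induction K arbitrary: y y' k)
  case 0 thus ?case by simp
next
  case (Suc K)
  have pr: "prime p" using p by auto
  have pp: "(of_nat p :: rat) \<noteq> 0" using p by auto
  have h1: "pdiv_ge p 1 (y - y')" using pge_mono[OF Suc.prems(3)] by simp
  have "pdiv_ge p 1 ((y - y') + (y' - of_int (d0 p y')))" using pge_add[OF pr h1 d0_prop[OF p Suc.prems(2)]] .
  hence "pdiv_ge p 1 (y - of_int (d0 p y'))" by simp
  hence eq0: "d0 p y' = d0 p y" using d0_unique[OF p Suc.prems(1) d0_in[OF p]] by blast
  show ?case
  proof (cases k)
    case 0 thus ?thesis using eq0 by simp
  next
    case (Suc k')
    define z where "z = (y - of_int (d0 p y)) / of_nat p"
    define z' where "z' = (y' - of_int (d0 p y')) / of_nat p"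
    have "y - y' = of_nat p * (z - z')" unfolding z_def z'_def eq0 using pp by (simp add: field_simps)
    hence "pdiv_ge p (int K) (z - z')" using Suc.prems(3) pge_p_mult[OF pr] by simp
    hence "digs p z k' = digs p z' k'"
      using Suc.IH[of z z' k'] shift_Zp[OF p Suc.prems(1)] shift_Zp[OF p Suc.prems(2)] Suc.prems(4) \<open>k = Suc k'\<close>
      unfolding z_def z'_def by simp
    thus ?thesis unfolding \<open>k = Suc k'\<close> z_def z'_def by simp
  qed
qed



definition ev_val :: "nat \<Rightarrow> (nat \<Rightarrow> rat) \<Rightarrow> int \<Rightarrow> bool" where
  "ev_val p A v \<longleftrightarrow> (\<forall>\<^sub>F m in sequentially. A m \<noteq> 0 \<and> pval p (A m) = v)"

lemma powi_split:
  assumes pp: "(x::rat) \<noteq> 0" and n: "j \<le> n"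
  shows "x powi n = x powi j * x ^ nat (n - j)"
proof -
  have "x powi n = x powi (j + (n - j))" by simp
  also have "\<dots> = x powi j * x powi (n - j)" using pp power_int_add[of x j "n - j"] by blast
  also have "\<dots> = x powi j * x ^ nat (n - j)" using n by (simp add: power_int_def)
  finally show ?thesis .
qed

lemma sum_powi_int:
  assumes p: "prime p" and S: "\<forall>n\<in>S. j \<le> n"
  shows "(\<Sum>n\<in>S. of_int (e n) * (of_nat p :: rat) powi n) = of_nat p powi j * of_int (\<Sum>n\<in>S. e n * int p ^ nat (n - j))"
proof -
  have pp: "(of_nat p :: rat) \<noteq> 0" using p by (simp add: prime_gt_0_nat)
  have "(\<Sum>n\<in>S. of_int (e n) * (of_nat p :: rat) powi n) = (\<Sum>n\<in>S. of_nat p powi j * (of_int (e n) * of_nat p ^ nat (n - j)))"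
    by (rule sum.cong) (use powi_split[OF pp] S in auto)
  also have "\<dots> = of_nat p powi j * of_int (\<Sum>n\<in>S. e n * int p ^ nat (n - j))"
    by (simp add: sum_distrib_left)
  finally show ?thesis .
qed

lemma sum_int_shift:
  "(\<Sum>n\<in>{v..<N}. f n) = (\<Sum>k<nat (N - v). f (v + int k))"
  by (rule sum.reindex_bij_witness[of _ "\<lambda>k. v + int k" "\<lambda>n. nat (n - v)"]) auto

lemma exist_ev_val:
  assumes p: "prime p" and c: "padic_cauchy p A" and nn: "\<not> (\<forall>N. padic_close p A 0 N)"
  shows "\<exists>v. ev_val p A v"
proof -
  obtain N where hN: "\<not> padic_close p A 0 N" using nn by blast
  obtain M where hM: "\<forall>m\<ge>M. \<forall>n\<ge>M. pdiv_ge p N (A m - A n)" using c unfolding padic_cauchy_def by blast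
  have "\<exists>m0\<ge>M. \<not> pdiv_ge p N (A m0)"
  proof (rule ccontr)
    assume "\<not> (\<exists>m0\<ge>M. \<not> pdiv_ge p N (A m0))"
    hence "\<forall>m\<ge>M. pdiv_ge p N (A m - 0)" by simp
    hence "padic_close p A 0 N" unfolding padic_close_def eventually_sequentially by blast
    with hN show False by simp
  qed
  then obtain m0 where m0: "m0 \<ge> M" "\<not> pdiv_ge p N (A m0)" by blast
  have a0: "A m0 \<noteq> 0" and vN: "pval p (A m0) < N" using m0(2) unfolding pdiv_ge_def by auto
  have "\<forall>m\<ge>M. A m \<noteq> 0 \<and> pval p (A m) = pval p (A m0)"
  proof (intro allI impI)
    fix m assume m: "m \<ge> M"
    have "pdiv_ge p (pval p (A m0) + 1) (A m - A m0)"
      using pge_mono[OF hM[rule_format, OF m m0(1)]] vN by simp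
    from pval_strict[OF p a0 this] show "A m \<noteq> 0 \<and> pval p (A m) = pval p (A m0)" by simp
  qed
  thus ?thesis unfolding ev_val_def eventually_sequentially by blast
qed

lemma zero_digit: "p = 2 \<or> p = 3 \<Longrightarrow> 0 \<in> digit_set p"
  using digit_set_23 by auto

lemma digit_exist:
  assumes p: "p = 2 \<or> p = 3" and c: "padic_cauchy p A" and ev: "ev_val p A v"
  shows "\<exists>a. is_digit_exp p A a v"
proof -
  have pr: "prime p" using p by auto
  have pp: "(of_nat p :: rat) \<noteq> 0" using p by auto
  obtain M0 where M0: "\<forall>m\<ge>M0. A m \<noteq> 0 \<and> pval p (A m) = v" using ev unfolding ev_val_def eventually_sequentially by blast
  define Mf where "Mf N = (SOME M. \<forall>m\<ge>M. \<forall>n\<ge>M. pdiv_ge p N (A m - A n))" for N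
  have Mf: "\<forall>m\<ge>Mf N. \<forall>n\<ge>Mf N. pdiv_ge p N (A m - A n)" for N
    unfolding Mf_def by (rule someI_ex) (use c in \<open>auto simp: padic_cauchy_def\<close>)
  define Mg where "Mg N = max M0 (Mf N)" for N
  define y where "y m = of_nat p powi (- v) * A m" for m
  have Ay: "A m = of_nat p powi v * y m" for m unfolding y_def using pp by (simp add: power_int_minus)
  have y0: "pdiv_ge p 0 (y m)" and y1: "\<not> pdiv_ge p 1 (y m)" if m: "m \<ge> M0" for m
  proof -
    have "y m \<noteq> 0" using M0 m pp unfolding y_def by simp
    moreover have "pval p (y m) = 0"
      unfolding y_def using pval_mult[OF pr, of "of_nat p powi (- v)" "A m"] M0 m pp pval_pow[OF pr] by simp
    ultimately show "pdiv_ge p 0 (y m)" "\<not> pdiv_ge p 1 (y m)" unfolding pdiv_ge_def by auto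
  qed
  define a where "a n = (if n < v then 0 else digs p (y (Mg (n + 1))) (nat (n - v)))" for n
  have key: "digs p (y m) (nat (n - v)) = a n" if n: "n \<ge> v" and m: "m \<ge> Mg (n + 1)" for n m
  proof -
    have "pdiv_ge p (n + 1) (A m - A (Mg (n + 1)))"
      using Mf[of "n+1"] m unfolding Mg_def by auto
    moreover have "A m - A (Mg (n + 1)) = of_nat p powi v * (y m - y (Mg (n + 1)))"
      using Ay by (simp add: algebra_simps)
    ultimately have "pdiv_ge p (n + 1 - v) (y m - y (Mg (n + 1)))"
      using pge_pow_mult[OF pr] by simp
    moreover have "int (Suc (nat (n - v))) = n + 1 - v" using n by simp
    ultimately have "pdiv_ge p (int (Suc (nat (n - v)))) (y m - y (Mg (n + 1)))" by metis
    moreover have "m \<ge> M0" "Mg (n + 1) \<ge> M0" using m unfolding Mg_def by auto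
    ultimately have "digs p (y m) (nat (n - v)) = digs p (y (Mg (n + 1))) (nat (n - v))"
      using digs_eq[OF p y0 y0] by blast
    thus ?thesis unfolding a_def using n by simp
  qed
  have "is_digit_exp p A a v"
    unfolding is_digit_exp_def
  proof (intro conjI allI impI)
    fix n show "a n \<in> digit_set p" unfolding a_def using zero_digit[OF p] digs_in[OF p] by auto
  next
    fix n assume "n < v" thus "a n = 0" unfolding a_def by simp
  next
    have "a v = d0 p (y (Mg (v + 1)))" unfolding a_def by simp
    moreover have "Mg (v + 1) \<ge> M0" unfolding Mg_def by simp
    ultimately show "a v \<noteq> 0" using d0_nonzero[OF p y0 y1] by simp
  next
    fix N assume N: "N \<ge> v"
    have ev1: "\<forall>\<^sub>F m in sequentially. \<forall>n\<in>{v..<N}. m \<ge> Mg (n + 1)"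
      by (rule eventually_ball_finite) auto
    have ev2: "\<forall>\<^sub>F m in sequentially. m \<ge> M0" by (rule eventually_ge_at_top)
    show "padic_close p A (\<Sum>n\<in>{v..<N}. of_int (a n) * of_nat p powi n) N"
      unfolding padic_close_def
    proof (rule eventually_mono[OF eventually_conj[OF ev1 ev2]])
      fix m assume hm: "(\<forall>n\<in>{v..<N}. m \<ge> Mg (n + 1)) \<and> m \<ge> M0"
      have "(\<Sum>n\<in>{v..<N}. of_int (a n) * (of_nat p :: rat) powi n) =
            (\<Sum>n\<in>{v..<N}. of_int (digs p (y m) (nat (n - v))) * of_nat p powi n)"
        by (rule sum.cong) (use key hm in auto)
      also have "\<dots> = (\<Sum>k<nat (N - v). of_int (digs p (y m) k) * of_nat p powi (v + int k))"
        by (subst sum_int_shift) simp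
      also have "\<dots> = of_nat p powi v * (\<Sum>k<nat (N - v). of_int (digs p (y m) k) * of_nat p ^ k)"
        using pp by (simp add: sum_distrib_left power_int_add algebra_simps)
      finally have es: "(\<Sum>n\<in>{v..<N}. of_int (a n) * (of_nat p :: rat) powi n) = \<dots>" .
      have "pdiv_ge p (int (nat (N - v))) (y m - (\<Sum>k<nat (N - v). of_int (digs p (y m) k) * of_nat p ^ k))"
        using digs_sum[OF p y0] hm by blast
      hence "pdiv_ge p N (of_nat p powi v * (y m - (\<Sum>k<nat (N - v). of_int (digs p (y m) k) * of_nat p ^ k)))"
        using pge_pow_mult[OF pr] N by simp
      thus "pdiv_ge p N (A m - (\<Sum>n\<in>{v..<N}. of_int (a n) * of_nat p powi n))"
        unfolding es Ay by (simp add: algebra_simps)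
    qed
  qed
  thus ?thesis by blast
qed



lemma close_ext:
  assumes h: "is_digit_exp p A a r" and L: "L \<le> r" and N: "N \<ge> r"
  shows "padic_close p A (\<Sum>n\<in>{L..<N}. of_int (a n) * of_nat p powi n) N"
proof -
  have "(\<Sum>n\<in>{L..<N}. of_int (a n) * (of_nat p :: rat) powi n) = (\<Sum>n\<in>{r..<N}. of_int (a n) * of_nat p powi n)"
    by (rule sum.mono_neutral_right) (use h L in \<open>auto simp: is_digit_exp_def\<close>)
  thus ?thesis using h N unfolding is_digit_exp_def by simp
qed

lemma close_unique:
  assumes "padic_close p A s N" "padic_close p A s' N" "prime p"
  shows "pdiv_ge p N (s - s')"
proof -
  obtain M where "\<forall>m\<ge>M. pdiv_ge p N (A m - s) \<and> pdiv_ge p N (A m - s')"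
    using eventually_conj[OF assms(1,2)[unfolded padic_close_def]] unfolding eventually_sequentially by blast
  hence "pdiv_ge p N ((A M - s') - (A M - s))" using pge_diff[OF assms(3)] by blast
  thus ?thesis by simp
qed

lemma digit_unique:
  assumes p: "p = 2 \<or> p = 3" and h1: "is_digit_exp p A a r" and h2: "is_digit_exp p A a' r'"
  shows "a = a' \<and> r = r'"
proof -
  have pr: "prime p" using p by auto
  have pp: "(of_nat p :: rat) \<noteq> 0" using p by auto
  define L where "L = min r r'"
  have agree: "a n = a' n" if n: "n < N" and N: "N \<ge> max r r'" for n N
  proof (rule ccontr)
    assume ne: "a n \<noteq> a' n"
    have "n \<ge> L"
    proof (rule ccontr)
      assume "\<not> n \<ge> L"
      hence "n < r" "n < r'" unfolding L_def by auto
      thus False using ne h1 h2 unfolding is_digit_exp_def by auto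
    qed
    define B where "B = {j \<in> {L..<N}. a j \<noteq> a' j}"
    have Bf: "finite B" by (rule finite_subset[of _ "{L..<N}"]) (auto simp: B_def)
    have Bn: "n \<in> B" using n \<open>n \<ge> L\<close> ne unfolding B_def by auto
    define k where "k = Min B"
    have kB: "k \<in> B" unfolding k_def using Bf Bn Min_in by blast
    have kmin: "\<And>j. j \<in> B \<Longrightarrow> k \<le> j" unfolding k_def using Bf by simp
    have kr: "L \<le> k" "k < N" "a k \<noteq> a' k" using kB unfolding B_def by auto
    define e where "e j = a j - a' j" for j
    have "pdiv_ge p N ((\<Sum>j\<in>{L..<N}. of_int (a j) * of_nat p powi j) - (\<Sum>j\<in>{L..<N}. of_int (a' j) * of_nat p powi j))"
      using close_unique[OF close_ext[OF h1 _ _] close_ext[OF h2 _ _] pr] N unfolding L_def by auto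
    also have "(\<Sum>j\<in>{L..<N}. of_int (a j) * (of_nat p :: rat) powi j) - (\<Sum>j\<in>{L..<N}. of_int (a' j) * of_nat p powi j)
        = (\<Sum>j\<in>{L..<N}. of_int (e j) * of_nat p powi j)"
      unfolding e_def by (simp add: sum_subtractf[symmetric] algebra_simps)
    also have "\<dots> = (\<Sum>j\<in>{k..<N}. of_int (e j) * of_nat p powi j)"
    proof (rule sum.mono_neutral_right)
      show "\<forall>i\<in>{L..<N} - {k..<N}. of_int (e i) * (of_nat p :: rat) powi i = 0"
      proof
        fix i assume i: "i \<in> {L..<N} - {k..<N}"
        hence "i \<notin> B" using kmin by force
        hence "e i = 0" using i unfolding B_def e_def by auto
        thus "of_int (e i) * (of_nat p :: rat) powi i = 0" by simp
      qed
    qed (use kr in auto)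
    also have "\<dots> = of_nat p powi k * of_int (\<Sum>j\<in>{k..<N}. e j * int p ^ nat (j - k))"
      by (rule sum_powi_int[OF pr]) auto
    finally have "pdiv_ge p (N - k) (of_int (\<Sum>j\<in>{k..<N}. e j * int p ^ nat (j - k)))"
      using pge_pow_mult[OF pr] by simp
    hence "pdiv_ge p 1 (of_int (\<Sum>j\<in>{k..<N}. e j * int p ^ nat (j - k)))"
      using pge_mono kr by fastforce
    hence dv: "int p dvd (\<Sum>j\<in>{k..<N}. e j * int p ^ nat (j - k))" using pge_int_dvd[OF pr] by blast
    have "(\<Sum>j\<in>{k..<N}. e j * int p ^ nat (j - k)) = e k * int p ^ nat (k - k) + (\<Sum>j\<in>{k..<N} - {k}. e j * int p ^ nat (j - k))"
      by (rule sum.remove) (use kr in auto)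
    moreover have "int p dvd (\<Sum>j\<in>{k..<N} - {k}. e j * int p ^ nat (j - k))"
    proof (rule dvd_sum)
      fix j assume "j \<in> {k..<N} - {k}"
      hence "nat (j - k) = Suc (nat (j - k - 1))" by auto
      thus "int p dvd e j * int p ^ nat (j - k)" by simp
    qed
    ultimately have "int p dvd e k" using dv by (simp add: dvd_add_left_iff)
    hence "a k = a' k" using digit_eq[OF p] h1 h2 unfolding e_def is_digit_exp_def by blast
    with kr show False by simp
  qed
  have aa: "a = a'"
  proof
    fix n show "a n = a' n" using agree[of n "max (max r r') (n + 1)"] by simp
  qed
  have "r = r'"
  proof (rule ccontr)
    assume "r \<noteq> r'"
    hence "r < r' \<or> r' < r" by auto
    thus False using h1 h2 aa unfolding is_digit_exp_def by auto
  qed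
  with aa show ?thesis by simp
qed

lemma padic_val_digits:
  assumes p: "p = 2 \<or> p = 3" and c: "padic_cauchy p A" and ev: "ev_val p A v"
  shows "padic_val p A = v \<and> is_digit_exp p A (padic_digits p A) v"
proof -
  obtain a where a: "is_digit_exp p A a v" using digit_exist[OF p c ev] by blast
  have "padic_val p A = v"
    unfolding padic_val_def
  proof (rule the_equality)
    show "\<exists>a. is_digit_exp p A a v" using a by blast
  next
    fix r assume "\<exists>a. is_digit_exp p A a r"
    thus "r = v" using digit_unique[OF p _ a] by blast
  qed
  moreover have "padic_digits p A = a"
    unfolding padic_digits_def
  proof (rule the_equality)
    show "\<exists>r. is_digit_exp p A a r" using a by blast
  next
    fix a' assume "\<exists>r. is_digit_exp p A a' r"
    thus "a' = a" using digit_unique[OF p _ a] by blast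
  qed
  ultimately show ?thesis using a by simp
qed



lemma nonsq_rat:
  assumes ns: "\<not> (\<exists>k::int. D = k^2)"
  shows "(q::rat)^2 \<noteq> of_int D"
proof
  assume h: "q^2 = of_int D"
  obtain n d where qd: "quotient_of q = (n, d)" by (cases "quotient_of q")
  have d: "d > 0" using quotient_of_denom_pos[OF qd] .
  have cop: "coprime n d" using quotient_of_coprime[OF qd] .
  have eq: "q = of_int n / of_int d" using quotient_of_div[OF qd] .
  have "(of_int (n^2) :: rat) = of_int (D * d^2)" using h d unfolding eq by (simp add: field_simps power2_eq_square)
  hence nd: "n^2 = D * d^2" by (simp only: of_int_eq_iff)
  have "d dvd n^2" unfolding nd by simp
  moreover have "coprime (n^2) d" using cop by simp
  ultimately have "is_unit d" using coprime_common_divisor[of "n^2" d d] by simp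
  hence "d = 1" using d by simp
  hence "D = n^2" using nd by simp
  thus False using ns by blast
qed

lemma cauchy_lin:
  assumes p: "prime p" and c: "padic_cauchy p r"
  shows "padic_cauchy p (\<lambda>m. a + b * r m)"
  unfolding padic_cauchy_def
proof
  fix N
  define K where "K = (if b = 0 then 0 else pval p b)"
  obtain M where M: "\<forall>m\<ge>M. \<forall>n\<ge>M. pdiv_ge p (N - K) (r m - r n)" using c unfolding padic_cauchy_def by blast
  have "\<forall>m\<ge>M. \<forall>n\<ge>M. pdiv_ge p N ((a + b * r m) - (a + b * r n))"
  proof (intro allI impI)
    fix m n assume "m \<ge> M" "n \<ge> M"
    hence h: "pdiv_ge p (N - K) (r m - r n)" using M by blast
    have "(a + b * r m) - (a + b * r n) = b * (r m - r n)" by (simp add: algebra_simps)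
    moreover have "pdiv_ge p N (b * (r m - r n))"
    proof (cases "b = 0")
      case True thus ?thesis by simp
    next
      case False thus ?thesis using pge_scale[OF p False] h unfolding K_def by simp
    qed
    ultimately show "pdiv_ge p N ((a + b * r m) - (a + b * r n))" by simp
  qed
  thus "\<exists>M. \<forall>m\<ge>M. \<forall>n\<ge>M. pdiv_ge p N ((a + b * r m) - (a + b * r n))" by blast
qed

lemma r_int:
  assumes p: "prime p" and t: "padic_tendsto p (\<lambda>m. (r m)^2) (of_int D)"
  shows "\<forall>\<^sub>F m in sequentially. pdiv_ge p 0 (r m)"
proof -
  have "\<forall>\<^sub>F m in sequentially. pdiv_ge p 0 ((r m)^2 - of_int D)" using t unfolding padic_tendsto_def by blast
  thus ?thesis
  proof (rule eventually_mono)
    fix m assume h: "pdiv_ge p 0 ((r m)^2 - of_int D)"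
    have "pdiv_ge p 0 (((r m)^2 - of_int D) + of_int D)" using pge_add[OF p h pge_int[OF p]] .
    hence h2: "pdiv_ge p 0 (r m * r m)" by (simp add: power2_eq_square)
    show "pdiv_ge p 0 (r m)"
    proof (cases "r m = 0")
      case True thus ?thesis by simp
    next
      case False
      have "pval p (r m * r m) = 2 * pval p (r m)" using pval_mult[OF p False False] by simp
      moreover have "pval p (r m * r m) \<ge> 0" using h2 False unfolding pdiv_ge_def by simp
      ultimately show ?thesis unfolding pdiv_ge_def by simp
    qed
  qed
qed

lemma nonnull:
  assumes p: "prime p" and t: "padic_tendsto p (\<lambda>m. (r m)^2) (of_int D)"
    and ns: "\<not> (\<exists>k::int. D = k^2)" and b: "b \<noteq> 0"
  shows "\<not> (\<forall>N. padic_close p (\<lambda>m. a + b * r m) 0 N)"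
proof
  assume h: "\<forall>N. padic_close p (\<lambda>m. a + b * r m) 0 N"
  define q where "q = - a / b"
  have h1: "\<forall>\<^sub>F m in sequentially. pdiv_ge p N (r m - q)" for N
  proof -
    have "\<forall>\<^sub>F m in sequentially. pdiv_ge p (N - pval p (1 / b)) (a + b * r m - 0)"
      using h unfolding padic_close_def by blast
    thus ?thesis
    proof (rule eventually_mono)
      fix m assume "pdiv_ge p (N - pval p (1 / b)) (a + b * r m - 0)"
      hence "pdiv_ge p N ((1 / b) * (a + b * r m))" using pge_scale[OF p, of "1/b"] b by simp
      moreover have "(1 / b) * (a + b * r m) = r m - q" unfolding q_def using b by (simp add: field_simps)
      ultimately show "pdiv_ge p N (r m - q)" by simp
    qed
  qed
  define K where "K = (if q = 0 then 0 else pval p q)"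
  have qK: "pdiv_ge p K q" unfolding K_def by (cases "q = 0") (auto intro: pge_self)
  have h2: "\<forall>\<^sub>F m in sequentially. pdiv_ge p N ((r m)^2 - q^2)" for N
  proof -
    define N' where "N' = \<bar>N\<bar> + \<bar>K\<bar>"
    show ?thesis
    proof (rule eventually_mono[OF h1[of N']])
      fix m assume hm: "pdiv_ge p N' (r m - q)"
      have e1: "pdiv_ge p (N' + N') ((r m - q) * (r m - q))" using pge_mult[OF p hm hm] .
      have e2: "pdiv_ge p (0 + K + N') (2 * q * (r m - q))"
        using pge_mult[OF p pge_mult[OF p pge_int[OF p, of 2] qK] hm] by simp
      have e: "pdiv_ge p N ((r m - q) * (r m - q) + 2 * q * (r m - q))"
        by (rule pge_add[OF p pge_mono[OF e1] pge_mono[OF e2]]) (auto simp: N'_def)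
      moreover have "(r m - q) * (r m - q) + 2 * q * (r m - q) = (r m)^2 - q^2"
        by (simp add: algebra_simps power2_eq_square)
      ultimately show "pdiv_ge p N ((r m)^2 - q^2)" by simp
    qed
  qed
  have "pdiv_ge p N (of_int D - q^2)" for N
  proof -
    have "\<forall>\<^sub>F m in sequentially. pdiv_ge p N ((r m)^2 - of_int D) \<and> pdiv_ge p N ((r m)^2 - q^2)"
      using eventually_conj[OF _ h2] t unfolding padic_tendsto_def by blast
    then obtain M where "pdiv_ge p N ((r M)^2 - of_int D)" "pdiv_ge p N ((r M)^2 - q^2)"
      unfolding eventually_sequentially by blast
    from pge_diff[OF p this(2) this(1)] show ?thesis by simp
  qed
  hence "of_int D - q^2 = 0" using pge_all_zero by blast
  thus False using nonsq_rat[OF ns, of q] by simp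
qed

lemma ev_val_exists:
  assumes p: "p = 2 \<or> p = 3" and c: "padic_cauchy p r" and t: "padic_tendsto p (\<lambda>m. (r m)^2) (of_int D)"
    and ns: "\<not> (\<exists>k::int. D = k^2)" and b: "snd x \<noteq> 0"
  shows "\<exists>v. ev_val p (qs_approx r x) v"
proof -
  have pr: "prime p" using p by auto
  have "qs_approx r x = (\<lambda>m. fst x + snd x * r m)" unfolding qs_approx_def by simp
  thus ?thesis using exist_ev_val[OF pr cauchy_lin[OF pr c] nonnull[OF pr t ns b]] by simp
qed

lemma cauchy_approx:
  assumes p: "prime p" and c: "padic_cauchy p r"
  shows "padic_cauchy p (qs_approx r x)"
  unfolding qs_approx_def using cauchy_lin[OF p c] .



lemma powi_neg_form:
  assumes pp: "(of_nat p :: rat) \<noteq> 0" and v: "v \<le> 0"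
  shows "(of_nat p :: rat) powi v * of_int Z = of_int Z / of_nat p ^ nat (- v)"
proof -
  have "(of_nat p :: rat) powi v = inverse (of_nat p powi (- v))" by (simp add: power_int_minus)
  also have "\<dots> = inverse (of_nat p ^ nat (- v))" using v by (simp add: power_int_def)
  finally show ?thesis by (simp add: field_simps)
qed

lemma s_props:
  assumes p: "p = 2 \<or> p = 3" and c: "padic_cauchy p A" and ev: "ev_val p A v"
  shows "padic_val p A = v \<and> (\<exists>z. padic_s p A = of_int z / of_nat p ^ nat (- v)) \<and>
         (\<forall>\<^sub>F m in sequentially. pdiv_ge p 1 (A m - padic_s p A))"
proof -
  have pr: "prime p" using p by auto
  have pp: "(of_nat p :: rat) \<noteq> 0" using p by auto
  obtain hv: "padic_val p A = v" and hd: "is_digit_exp p A (padic_digits p A) v"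
    using padic_val_digits[OF p c ev] by blast
  define dg where "dg = padic_digits p A"
  have sdef: "padic_s p A = (\<Sum>n\<in>{v..0}. of_int (dg n) * of_nat p powi n)"
    unfolding padic_s_def hv dg_def ..
  show ?thesis
  proof (cases "v \<le> 0")
    case True
    have iv: "{v..0} = {v..<1}" by auto
    have cl: "padic_close p A (padic_s p A) 1"
      using hd True unfolding is_digit_exp_def sdef iv dg_def by simp
    have "padic_s p A = of_nat p powi v * of_int (\<Sum>n\<in>{v..0}. dg n * int p ^ nat (n - v))"
      unfolding sdef by (rule sum_powi_int[OF pr]) auto
    hence "padic_s p A = of_int (\<Sum>n\<in>{v..0}. dg n * int p ^ nat (n - v)) / of_nat p ^ nat (- v)"
      by (metis powi_neg_form[OF pp True])
    thus ?thesis using hv cl unfolding padic_close_def by blast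
  next
    case False
    hence s0: "padic_s p A = 0" unfolding sdef by simp
    have "\<forall>\<^sub>F m in sequentially. pdiv_ge p 1 (A m - padic_s p A)"
      using ev unfolding ev_val_def s0
      by (rule eventually_mono) (use False in \<open>auto simp: pdiv_ge_def\<close>)
    thus ?thesis using hv s0 by (metis of_int_0 div_0)
  qed
qed

lemma t_props:
  assumes p: "p = 2 \<or> p = 3" and c: "padic_cauchy p A" and ev: "ev_val p A v"
  shows "padic_val p A = v \<and> (\<exists>z. padic_t p A = of_int z / of_nat p ^ nat (- v)) \<and>
         (\<forall>\<^sub>F m in sequentially. pdiv_ge p 0 (A m - padic_t p A))"
proof -
  have pr: "prime p" using p by auto
  have pp: "(of_nat p :: rat) \<noteq> 0" using p by auto
  obtain hv: "padic_val p A = v" and hd: "is_digit_exp p A (padic_digits p A) v"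
    using padic_val_digits[OF p c ev] by blast
  define dg where "dg = padic_digits p A"
  have sdef: "padic_t p A = (\<Sum>n\<in>{v..-1}. of_int (dg n) * of_nat p powi n)"
    unfolding padic_t_def hv dg_def ..
  show ?thesis
  proof (cases "v \<le> 0")
    case True
    have iv: "{v..-1} = {v..<0}" by auto
    have cl: "padic_close p A (padic_t p A) 0"
      using hd True unfolding is_digit_exp_def sdef iv dg_def by simp
    have "padic_t p A = of_nat p powi v * of_int (\<Sum>n\<in>{v..-1}. dg n * int p ^ nat (n - v))"
      unfolding sdef by (rule sum_powi_int[OF pr]) auto
    hence "padic_t p A = of_int (\<Sum>n\<in>{v..-1}. dg n * int p ^ nat (n - v)) / of_nat p ^ nat (- v)"
      by (metis powi_neg_form[OF pp True])
    thus ?thesis using hv cl unfolding padic_close_def by blast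
  next
    case False
    hence s0: "padic_t p A = 0" unfolding sdef by simp
    have "\<forall>\<^sub>F m in sequentially. pdiv_ge p 0 (A m - padic_t p A)"
      using ev unfolding ev_val_def s0
      by (rule eventually_mono) (use False in \<open>auto simp: pdiv_ge_def\<close>)
    thus ?thesis using hv s0 by (metis of_int_0 div_0)
  qed
qed

lemma sbar_props:
  assumes p: "p = 2 \<or> p = 3" and c: "padic_cauchy p (qs_approx r x)" and ev: "ev_val p (qs_approx r x) v"
  shows "(\<forall>\<^sub>F m in sequentially. pdiv_ge p 1 (qs_approx r x m - s_bar p r x)) \<and>
         (\<exists>z. s_bar p r x = of_int z / of_nat p ^ nat (- v)) \<and>
         \<bar>s_bar p r x - fst x\<bar> \<le> of_nat p / 2"
proof -
  have pr: "prime p" using p by auto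
  have pp: "(of_nat p :: rat) \<noteq> 0" using p by auto
  have pp': "(of_nat p :: rat) > 0" using p by auto
  define A where "A = qs_approx r x"
  define s where "s = padic_s p A"
  define k where "k = round ((fst x - s) / of_nat p)"
  have sb: "s_bar p r x = of_int k * of_nat p + s"
    unfolding s_bar_def k_def s_def A_def qs_trace_avg_def Let_def by simp
  obtain z where z: "s = of_int z / of_nat p ^ nat (- v)"
    and cl: "\<forall>\<^sub>F m in sequentially. pdiv_ge p 1 (A m - s)"
    using s_props[OF p c ev] unfolding s_def A_def by blast
  have kp: "pdiv_ge p 1 (of_int k * of_nat p)"
    using pge_mult[OF pr pge_int[OF pr, of k] pge_pow[OF pr, of 1]] by simp
  have e1: "\<forall>\<^sub>F m in sequentially. pdiv_ge p 1 (A m - s_bar p r x)"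
    using cl
  proof (rule eventually_mono)
    fix m assume "pdiv_ge p 1 (A m - s)"
    from pge_diff[OF pr this kp] show "pdiv_ge p 1 (A m - s_bar p r x)" unfolding sb by (simp add: algebra_simps)
  qed
  have "s_bar p r x = of_int (k * int p * int p ^ nat (- v) + z) / of_nat p ^ nat (- v)"
    unfolding sb z using pp by (simp add: field_simps)
  hence e2: "\<exists>z. s_bar p r x = of_int z / of_nat p ^ nat (- v)" by blast
  have "\<bar>of_int k - (fst x - s) / of_nat p\<bar> \<le> 1 / 2" unfolding k_def by (rule of_int_round_abs_le)
  hence "\<bar>(of_int k - (fst x - s) / of_nat p) * of_nat p\<bar> \<le> 1 / 2 * of_nat p"
    using pp' by (simp add: abs_mult)
  moreover have "(of_int k - (fst x - s) / of_nat p) * of_nat p = s_bar p r x - fst x"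
    unfolding sb using pp by (simp add: field_simps)
  ultimately have e3: "\<bar>s_bar p r x - fst x\<bar> \<le> of_nat p / 2" by simp
  show ?thesis using e1 e2 e3 unfolding A_def by blast
qed

lemma tbar_props:
  assumes p: "p = 2 \<or> p = 3" and c: "padic_cauchy p (qs_approx r x)" and ev: "ev_val p (qs_approx r x) v"
  shows "(\<forall>\<^sub>F m in sequentially. pdiv_ge p 0 (qs_approx r x m - t_bar p r x)) \<and>
         (\<exists>z. t_bar p r x = of_int z / of_nat p ^ nat (- v)) \<and>
         \<bar>t_bar p r x - fst x\<bar> \<le> 1 / 2"
proof -
  have pr: "prime p" using p by auto
  have pp: "(of_nat p :: rat) \<noteq> 0" using p by auto
  define A where "A = qs_approx r x"
  define s where "s = padic_t p A"
  define k where "k = round (fst x - s)"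
  have sb: "t_bar p r x = of_int k + s"
    unfolding t_bar_def k_def s_def A_def qs_trace_avg_def Let_def by simp
  obtain z where z: "s = of_int z / of_nat p ^ nat (- v)"
    and cl: "\<forall>\<^sub>F m in sequentially. pdiv_ge p 0 (A m - s)"
    using t_props[OF p c ev] unfolding s_def A_def by blast
  have kp: "pdiv_ge p 0 (of_int k)" using pge_int[OF pr] .
  have e1: "\<forall>\<^sub>F m in sequentially. pdiv_ge p 0 (A m - t_bar p r x)"
    using cl
  proof (rule eventually_mono)
    fix m assume "pdiv_ge p 0 (A m - s)"
    from pge_diff[OF pr this kp] show "pdiv_ge p 0 (A m - t_bar p r x)" unfolding sb by (simp add: algebra_simps)
  qed
  have "t_bar p r x = of_int (k * int p ^ nat (- v) + z) / of_nat p ^ nat (- v)"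
    unfolding sb z using pp by (simp add: field_simps)
  hence e2: "\<exists>z. t_bar p r x = of_int z / of_nat p ^ nat (- v)" by blast
  have "\<bar>of_int k - (fst x - s)\<bar> \<le> 1 / 2" unfolding k_def by (rule of_int_round_abs_le)
  moreover have "of_int k - (fst x - s) = t_bar p r x - fst x" unfolding sb by simp
  ultimately have e3: "\<bar>t_bar p r x - fst x\<bar> \<le> 1 / 2" by simp
  show ?thesis using e1 e2 e3 unfolding A_def by blast
qed



locale cfset =
  fixes p :: nat and r :: "nat \<Rightarrow> rat" and D Q :: int
  assumes p23: "p = 2 \<or> p = 3" and Q0: "Q \<noteq> 0" and ns: "\<not> (\<exists>k::int. D = k^2)"
    and cau: "padic_cauchy p r" and tend: "padic_tendsto p (\<lambda>m. (r m)^2) (of_int D)"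
begin

lemma pr: "prime p" using p23 by auto
lemma pp: "(of_nat p :: rat) \<noteq> 0" using p23 by auto

definition Qn :: "qsqrt \<Rightarrow> rat" where "Qn x = of_int Q / snd x"
definition Pn :: "qsqrt \<Rightarrow> rat" where "Pn x = fst x * of_int Q / snd x"
definition Inv :: "qsqrt \<Rightarrow> bool" where
  "Inv x \<longleftrightarrow> snd x \<noteq> 0 \<and> Qn x \<in> \<int> \<and> Pn x \<in> \<int> \<and> (of_int D * of_int Q ^ 2 - Pn x ^ 2) / Qn x \<in> \<int>"
definition nxt :: "qsqrt \<Rightarrow> rat \<Rightarrow> qsqrt" where "nxt x c = qs_inv D (qs_sub_rat x c)"

lemma norm_nz:
  assumes b: "b \<noteq> 0" shows "(a::rat)^2 - of_int D * b^2 \<noteq> 0"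
proof
  assume "a^2 - of_int D * b^2 = 0"
  hence "(a / b)^2 = of_int D" using b by (simp add: field_simps power2_eq_square)
  thus False using nonsq_rat[OF ns] by blast
qed

lemma nxt_eq:
  "nxt x c = ((fst x - c) / ((fst x - c)^2 - of_int D * (snd x)^2), - snd x / ((fst x - c)^2 - of_int D * (snd x)^2))"
  unfolding nxt_def qs_inv_def qs_sub_rat_def by (cases x) (simp add: Let_def)

lemma Qn_approx:
  assumes b: "snd x \<noteq> 0"
  shows "Qn x * qs_approx r x m = Pn x + of_int Q * r m"
  unfolding Qn_def Pn_def qs_approx_def using b by (simp add: field_simps)

lemma Qn_val:
  assumes b: "snd x \<noteq> 0" and PZ: "Pn x \<in> \<int>" and ev: "ev_val p (qs_approx r x) v"
  shows "pdiv_ge p (- v) (Qn x)"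
proof -
  obtain z where z: "Pn x = of_int z" using PZ Ints_cases by blast
  have "\<forall>\<^sub>F m in sequentially. pdiv_ge p 0 (r m) \<and> (qs_approx r x m \<noteq> 0 \<and> pval p (qs_approx r x m) = v)"
    using eventually_conj[OF r_int[OF pr tend] ev[unfolded ev_val_def]] .
  then obtain m where m: "pdiv_ge p 0 (r m)" "qs_approx r x m \<noteq> 0" "pval p (qs_approx r x m) = v"
    unfolding eventually_sequentially by blast
  have "pdiv_ge p (0 + 0) (of_int Q * r m)" using pge_mult[OF pr pge_int[OF pr] m(1)] .
  hence "pdiv_ge p 0 (Pn x + of_int Q * r m)"
    unfolding z using pge_add[OF pr pge_int[OF pr]] by simp
  hence "pdiv_ge p 0 (Qn x * qs_approx r x m)" using Qn_approx[OF b] by simp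
  from pge_div[OF pr m(2) this] show ?thesis using m(3) by simp
qed

lemma snd_nxt: "snd x \<noteq> 0 \<Longrightarrow> snd (nxt x c) \<noteq> 0"
  unfolding nxt_eq using norm_nz by simp

lemma pval_one: "pval p 1 = 0"
  using pval_int[OF pr, of 1] by simp

lemma val_next:
  assumes b: "snd x \<noteq> 0" and h: "\<forall>\<^sub>F m in sequentially. pdiv_ge p e (qs_approx r x m - c)"
  shows "\<exists>v'. ev_val p (qs_approx r (nxt x c)) v' \<and> v' \<le> - e"
proof -
  define a where "a = fst x"
  define bb where "bb = snd x"
  define N where "N = (a - c)^2 - of_int D * bb^2"
  have N0: "N \<noteq> 0" unfolding N_def bb_def using norm_nz[OF b] .
  have b0: "bb \<noteq> 0" using b unfolding bb_def .
  have x': "nxt x c = ((a - c) / N, - bb / N)" unfolding nxt_eq N_def a_def bb_def ..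
  obtain v' where v': "ev_val p (qs_approx r (nxt x c)) v'"
    using ev_val_exists[OF p23 cau tend ns snd_nxt[OF b]] by blast
  define K where "K = bb^2 / N"
  have K0: "K \<noteq> 0" unfolding K_def using N0 b0 by simp
  have idt: "qs_approx r (nxt x c) m * (qs_approx r x m - c) = 1 + K * (of_int D - (r m)^2)" for m
  proof -
    have "qs_approx r (nxt x c) m * (qs_approx r x m - c) = ((a - c)^2 - bb^2 * (r m)^2) / N"
      unfolding qs_approx_def x' a_def[symmetric] bb_def[symmetric] using N0
      by (simp add: field_simps power2_eq_square)
    also have "\<dots> = (N + of_int D * bb^2 - bb^2 * (r m)^2) / N" unfolding N_def by simp
    also have "\<dots> = 1 + K * (of_int D - (r m)^2)" unfolding K_def using N0 by (simp add: field_simps)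
    finally show ?thesis .
  qed
  have hE: "\<forall>\<^sub>F m in sequentially. pdiv_ge p 1 (K * (of_int D - (r m)^2))"
  proof -
    have "\<forall>\<^sub>F m in sequentially. pdiv_ge p (1 - pval p K) ((r m)^2 - of_int D)"
      using tend unfolding padic_tendsto_def by blast
    thus ?thesis
    proof (rule eventually_mono)
      fix m assume "pdiv_ge p (1 - pval p K) ((r m)^2 - of_int D)"
      from pge_uminus[OF pr this] have "pdiv_ge p (1 - pval p K) (of_int D - (r m)^2)" by simp
      from pge_scale[OF pr K0 this] show "pdiv_ge p 1 (K * (of_int D - (r m)^2))" .
    qed
  qed
  have "\<forall>\<^sub>F m in sequentially. (qs_approx r (nxt x c) m \<noteq> 0 \<and> pval p (qs_approx r (nxt x c) m) = v') \<and>
      pdiv_ge p 1 (K * (of_int D - (r m)^2)) \<and> pdiv_ge p e (qs_approx r x m - c)"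
    using eventually_conj[OF v'[unfolded ev_val_def] eventually_conj[OF hE h]] .
  then obtain m where m: "qs_approx r (nxt x c) m \<noteq> 0" "pval p (qs_approx r (nxt x c) m) = v'"
      "pdiv_ge p 1 (K * (of_int D - (r m)^2))" "pdiv_ge p e (qs_approx r x m - c)"
    unfolding eventually_sequentially by blast
  have "pdiv_ge p (pval p 1 + 1) (K * (of_int D - (r m)^2))" using m(3) pval_one by simp
  from pval_strict[OF pr _ this] have one: "1 + K * (of_int D - (r m)^2) \<noteq> 0" "pval p (1 + K * (of_int D - (r m)^2)) = 0"
    using pval_one by auto
  have Bnz: "qs_approx r x m - c \<noteq> 0" using one(1) idt[of m] by auto
  have "pval p (qs_approx r (nxt x c) m * (qs_approx r x m - c)) = v' + pval p (qs_approx r x m - c)"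
    using pval_mult[OF pr m(1) Bnz] m(2) by simp
  hence "v' + pval p (qs_approx r x m - c) = 0" using one(2) idt[of m] by simp
  moreover have "pval p (qs_approx r x m - c) \<ge> e" using m(4) Bnz unfolding pdiv_ge_def by simp
  ultimately show ?thesis using v' by (intro exI[of _ v']) simp
qed

lemma Zp_Ints:
  assumes h: "pdiv_ge p 0 y" and y: "y = of_int z / of_nat p ^ j"
  shows "y \<in> \<int>"
proof -
  have "int p ^ j dvd z" using pge_Zp_int[OF pr] h y by simp
  then obtain w where "z = int p ^ j * w" by (metis dvdE)
  hence "y = of_int w" using y pp by simp
  thus ?thesis by simp
qed

lemma step:
  assumes I: "Inv x" and ev: "ev_val p (qs_approx r x) v"
    and h: "\<forall>\<^sub>F m in sequentially. pdiv_ge p e (qs_approx r x m - c)" and e: "e \<ge> 0"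
    and cz: "c = of_int z / of_nat p ^ nat (- v)"
  shows "Inv (nxt x c) \<and> Pn (nxt x c) = (c - fst x) * Qn x \<and>
         Qn (nxt x c) = of_int D * of_int Q ^ 2 / Qn x - (c - fst x)^2 * Qn x \<and>
         (\<exists>v'. ev_val p (qs_approx r (nxt x c)) v' \<and> v' \<le> - e)"
proof -
  define a where "a = fst x"
  define bb where "bb = snd x"
  define N where "N = (a - c)^2 - of_int D * bb^2"
  have b: "snd x \<noteq> 0" using I unfolding Inv_def by simp
  have N0: "N \<noteq> 0" unfolding N_def bb_def using norm_nz[OF b] .
  have b0: "bb \<noteq> 0" using b unfolding bb_def .
  have x': "nxt x c = ((a - c) / N, - bb / N)" unfolding nxt_eq N_def a_def bb_def ..
  have Q0': "(of_int Q :: rat) \<noteq> 0" using Q0 by simp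
  obtain Qi where Qi: "Qn x = of_int Qi" using I Ints_cases unfolding Inv_def by metis
  obtain Pi where Pi: "Pn x = of_int Pi" using I Ints_cases unfolding Inv_def by metis
  obtain Wi where Wi: "(of_int D * of_int Q ^ 2 - Pn x ^ 2) / Qn x = of_int Wi" using I Ints_cases unfolding Inv_def by metis
  have Qnz: "Qn x \<noteq> 0" unfolding Qn_def using b Q0' by simp
  have aP: "a * Qn x = Pn x" unfolding a_def Qn_def Pn_def by simp
  have eP: "Pn (nxt x c) = (c - a) * Qn x"
    unfolding Pn_def Qn_def x' using N0 b0 unfolding bb_def[symmetric] by (simp add: field_simps)
  have eQ: "Qn (nxt x c) = of_int D * of_int Q ^ 2 / Qn x - (c - a)^2 * Qn x"
    unfolding Qn_def x' N_def using N0 b0 Q0' unfolding bb_def[symmetric] N_def by (simp add: field_simps power2_eq_square)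
  obtain v' where v': "ev_val p (qs_approx r (nxt x c)) v'" "v' \<le> - e"
    using val_next[OF b h] by blast
  have cQ: "c * Qn x \<in> \<int>"
  proof (cases "v \<ge> 0")
    case True
    hence "c = of_int z" using cz by simp
    thus ?thesis using Qi by simp
  next
    case False
    have "pdiv_ge p (- v) (Qn x)" using Qn_val[OF b _ ev] I unfolding Inv_def by simp
    hence "pdiv_ge p 0 (of_nat p powi v * Qn x)" using pge_pow_mult[OF pr] by simp
    hence "pdiv_ge p (0 + 0) (of_int z * (of_nat p powi v * Qn x))" using pge_mult[OF pr pge_int[OF pr]] by blast
    moreover have "of_int z * (of_nat p powi v * Qn x) = c * Qn x"
    proof -
      have "c = of_nat p powi v * of_int z" using cz powi_neg_form[OF pp, of v z] False by simp
      thus ?thesis by (simp add: mult.commute mult.left_commute)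
    qed
    ultimately have "pdiv_ge p 0 (c * Qn x)" by simp
    moreover have "c * Qn x = of_int (z * Qi) / of_nat p ^ nat (- v)" using cz Qi by simp
    ultimately show ?thesis using Zp_Ints by blast
  qed
  then obtain Ci where Ci: "c * Qn x = of_int Ci" using Ints_cases by metis
  have PZ': "Pn (nxt x c) \<in> \<int>" unfolding eP using Ci Pi aP by (simp add: algebra_simps)
  have Qform: "Qn (nxt x c) = of_int Wi - c * (c * Qn x - 2 * Pn x)"
  proof -
    have "Qn (nxt x c) = (of_int D * of_int Q ^ 2 - Pn x ^ 2) / Qn x + Pn x ^ 2 / Qn x - (c - a)^2 * Qn x"
      unfolding eQ by (simp add: diff_divide_distrib)
    also have "Pn x ^ 2 / Qn x = a * Pn x" unfolding aP[symmetric] using Qnz by (simp add: power2_eq_square)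
    finally show ?thesis unfolding Wi using aP[symmetric] by (simp add: algebra_simps power2_eq_square)
  qed
  have QZ': "Qn (nxt x c) \<in> \<int>"
  proof -
    have "Qn (nxt x c) = of_int Wi - c * (of_int Ci - 2 * of_int Pi)" using Qform Ci Pi by simp
    also have "\<dots> = of_int (Wi * int p ^ nat (- v) - z * (Ci - 2 * Pi)) / of_nat p ^ nat (- v)"
      unfolding cz using pp by (simp add: field_simps)
    finally have "Qn (nxt x c) = of_int (Wi * int p ^ nat (- v) - z * (Ci - 2 * Pi)) / of_nat p ^ nat (- v)" .
    moreover have "pdiv_ge p 0 (Qn (nxt x c))"
    proof -
      have "pdiv_ge p (- v') (Qn (nxt x c))"
        using Qn_val[OF snd_nxt[OF b] PZ' v'(1)] .
      thus ?thesis using pge_mono v'(2) e by fastforce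
    qed
    ultimately show ?thesis using Zp_Ints by blast
  qed
  have QQ: "Qn x * Qn (nxt x c) = of_int D * of_int Q ^ 2 - Pn (nxt x c) ^ 2"
    unfolding eQ eP using Qnz by (simp add: field_simps power2_eq_square)
  have Qnz': "Qn (nxt x c) \<noteq> 0" unfolding Qn_def using snd_nxt[OF b] Q0' by simp
  have WZ': "(of_int D * of_int Q ^ 2 - Pn (nxt x c) ^ 2) / Qn (nxt x c) \<in> \<int>"
    unfolding QQ[symmetric] using Qnz' Qi by simp
  have "Inv (nxt x c)" unfolding Inv_def using snd_nxt[OF b] QZ' PZ' WZ' by blast
  thus ?thesis using eP eQ v' unfolding a_def by blast
qed

end



lemma bound_seq:
  fixes X :: "nat \<Rightarrow> rat" and E K :: rat
  assumes X1: "\<And>n. X n \<ge> 1" and E: "E \<ge> 0" and K: "K \<ge> 3 * E" "K \<ge> X 0"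
    and stS: "\<And>n. S n \<Longrightarrow> X (Suc n) \<le> E + 9/4 * X n"
    and stT: "\<And>n. \<not> S n \<Longrightarrow> X (Suc n) \<le> E + 1/4 * X n"
    and alt: "\<And>n. S n \<Longrightarrow> \<not> S (Suc n)"
  shows "X n \<le> E + 9/4 * K"
proof -
  have C: "X n \<le> K \<or> (\<exists>k. n = Suc k \<and> S k \<and> X k \<le> K)" for n
  proof (induction n)
    case 0 thus ?case using K by simp
  next
    case (Suc n)
    show ?case
    proof (cases "S n")
      case True
      have "X n \<le> K"
      proof -
        { assume "\<not> X n \<le> K"
          then obtain k where "n = Suc k" "S k" using Suc.IH by blast
          hence False using alt True by blast }
        thus ?thesis by blast
      qed
      thus ?thesis using True by blast
    next
      case False
      have s: "X (Suc n) \<le> E + 1/4 * X n" using stT[OF False] .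
      from Suc.IH show ?thesis
      proof
        assume "X n \<le> K"
        hence "X (Suc n) \<le> K" using s K E by linarith
        thus ?thesis by blast
      next
        assume "\<exists>k. n = Suc k \<and> S k \<and> X k \<le> K"
        then obtain k where k: "n = Suc k" "S k" "X k \<le> K" by blast
        have "X n \<le> E + 9/4 * X k" using stS[OF k(2)] k(1) by simp
        hence "X n \<le> E + 9/4 * K" using k(3) by simp
        hence "4 * X n \<le> 4 * E + 9 * K" by simp
        moreover have "4 * X (Suc n) \<le> 4 * E + X n" using s by simp
        ultimately have "16 * X (Suc n) \<le> 20 * E + 9 * K" by linarith
        hence "X (Suc n) \<le> K" using K E by linarith
        thus ?thesis by blast
      qed
    qed
  qed
  from C[of n] show ?thesis
  proof
    assume "X n \<le> K" thus ?thesis using E K X1[of 0] by simp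
  next
    assume "\<exists>k. n = Suc k \<and> S k \<and> X k \<le> K"
    then obtain k where k: "n = Suc k" "S k" "X k \<le> K" by blast
    thus ?thesis using stS[OF k(2)] by simp
  qed
qed

context cfset begin

lemma alpha_Suc: "cf_alpha D R x (Suc n) = nxt (cf_alpha D R x n) (cf_b D R x n)"
  unfolding cf_b_def nxt_def by (simp add: Let_def)

lemma Inv_init: "Inv (of_int P / of_int Q, 1 / of_int Q)"
proof -
  have Q': "(of_int Q :: rat) \<noteq> 0" using Q0 by simp
  have "Qn (of_int P / of_int Q, 1 / of_int Q) = of_int (Q * Q)" unfolding Qn_def using Q' by simp
  moreover have "Pn (of_int P / of_int Q, 1 / of_int Q) = of_int (P * Q)" unfolding Pn_def using Q' by simp
  moreover have "(of_int D * of_int Q ^ 2 - of_int (P * Q) ^ 2) / of_int (Q * Q) = (of_int (D - P * P) :: rat)"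
    using Q' by (simp add: field_simps power2_eq_square)
  ultimately show ?thesis unfolding Inv_def using Q' by simp
qed

lemma states_finite:
  fixes \<alpha> :: "nat \<Rightarrow> qsqrt" and bs :: "nat \<Rightarrow> rat" and S :: "nat \<Rightarrow> bool"
  assumes inv: "\<And>n. Inv (\<alpha> n)"
    and hS: "\<And>n. S n \<Longrightarrow> \<bar>bs n - fst (\<alpha> n)\<bar> \<le> 3/2"
    and hT: "\<And>n. \<not> S n \<Longrightarrow> \<bar>bs n - fst (\<alpha> n)\<bar> \<le> 1/2"
    and alt: "\<And>n. S n \<Longrightarrow> \<not> S (Suc n)"
    and Qrec: "\<And>n. Qn (\<alpha> (Suc n)) = of_int D * of_int Q ^ 2 / Qn (\<alpha> n) - (bs n - fst (\<alpha> n))^2 * Qn (\<alpha> n)"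
    and Prec: "\<And>n. Pn (\<alpha> (Suc n)) = (bs n - fst (\<alpha> n)) * Qn (\<alpha> n)"
  shows "finite (range \<alpha>)"
proof -
  define E :: rat where "E = \<bar>of_int D\<bar> * of_int Q ^ 2"
  define X where "X n = \<bar>Qn (\<alpha> n)\<bar>" for n
  define K where "K = max (3 * E) (X 0)"
  have E0: "E \<ge> 0" unfolding E_def by simp
  have X1: "X n \<ge> 1" for n
  proof -
    have "Qn (\<alpha> n) \<in> \<int>" "snd (\<alpha> n) \<noteq> 0" using inv[of n] unfolding Inv_def by auto
    moreover have "Qn (\<alpha> n) \<noteq> 0" unfolding Qn_def using calculation(2) Q0 by simp
    ultimately obtain i where "Qn (\<alpha> n) = of_int i" "i \<noteq> 0" by (metis Ints_cases of_int_0)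
    thus ?thesis unfolding X_def by simp
  qed
  have gen: "X (Suc n) \<le> E + h^2 * X n" if h: "\<bar>bs n - fst (\<alpha> n)\<bar> \<le> h" for n h
  proof -
    have t1: "X (Suc n) \<le> \<bar>of_int D * of_int Q ^ 2 / Qn (\<alpha> n)\<bar> + \<bar>(bs n - fst (\<alpha> n))^2 * Qn (\<alpha> n)\<bar>"
      unfolding X_def Qrec by (rule abs_triangle_ineq4)
    have t2: "\<bar>of_int D * of_int Q ^ 2 / Qn (\<alpha> n)\<bar> = E / X n" unfolding E_def X_def by (simp add: abs_mult)
    have t3: "E / X n \<le> E / 1" by (rule divide_left_mono) (use X1[of n] E0 in auto)
    have t4: "\<bar>(bs n - fst (\<alpha> n))^2 * Qn (\<alpha> n)\<bar> = (bs n - fst (\<alpha> n))^2 * X n" unfolding X_def by (simp add: abs_mult)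
    have t5: "(bs n - fst (\<alpha> n))^2 = \<bar>bs n - fst (\<alpha> n)\<bar>^2" by simp
    have t6: "\<bar>bs n - fst (\<alpha> n)\<bar>^2 \<le> h^2" by (rule power_mono[OF h abs_ge_zero])
    have t7: "(bs n - fst (\<alpha> n))^2 * X n \<le> h^2 * X n" using t5 t6 X1[of n] by (simp add: mult_right_mono)
    show ?thesis using t1 t2 t3 t4 t7 by simp
  qed
  have B: "X n \<le> E + 9/4 * K" for n
  proof (rule bound_seq[of X E K S n])
    show "\<And>n. 1 \<le> X n" by (rule X1)
    show "0 \<le> E" by (rule E0)
    show "3 * E \<le> K" "X 0 \<le> K" unfolding K_def by auto
    show "X (Suc n) \<le> E + 9 / 4 * X n" if "S n" for n using gen[OF hS[OF that]] by (simp add: power2_eq_square)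
    show "X (Suc n) \<le> E + 1 / 4 * X n" if "\<not> S n" for n using gen[OF hT[OF that]] by (simp add: power2_eq_square)
    show "\<And>n. S n \<Longrightarrow> \<not> S (Suc n)" by (rule alt)
  qed
  define B1 where "B1 = E + 9/4 * K"
  define B2 where "B2 = max \<bar>Pn (\<alpha> 0)\<bar> (3/2 * B1)"
  have PB: "\<bar>Pn (\<alpha> n)\<bar> \<le> B2" for n
  proof (cases n)
    case 0 thus ?thesis unfolding B2_def by simp
  next
    case (Suc k)
    have hk: "\<bar>bs k - fst (\<alpha> k)\<bar> \<le> 3/2" using hS[of k] hT[of k] by (cases "S k") auto
    have "\<bar>Pn (\<alpha> n)\<bar> = \<bar>bs k - fst (\<alpha> k)\<bar> * X k" unfolding Suc Prec X_def by (simp add: abs_mult)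
    also have "\<dots> \<le> 3/2 * B1" using mult_mono[OF hk B[of k, folded B1_def]] X1[of k] by simp
    finally show ?thesis unfolding B2_def by simp
  qed
  define M where "M = max (nat \<lceil>B1\<rceil>) (nat \<lceil>B2\<rceil>)"
  have sub: "range \<alpha> \<subseteq> (\<lambda>(i, j). (of_int i / of_int j, of_int Q / of_int j)) ` ({- int M..int M} \<times> {- int M..int M})"
  proof
    fix y assume "y \<in> range \<alpha>"
    then obtain n where y: "y = \<alpha> n" by blast
    have I: "snd y \<noteq> 0" "Qn y \<in> \<int>" "Pn y \<in> \<int>" using inv[of n] y unfolding Inv_def by auto
    obtain j where j: "Qn y = of_int j" using I(2) Ints_cases by metis
    obtain i where i: "Pn y = of_int i" using I(3) Ints_cases by metis
    have Q': "(of_int Q :: rat) \<noteq> 0" using Q0 by simp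
    have "\<bar>of_int j\<bar> \<le> B1" using B[of n] j y unfolding X_def B1_def by simp
    hence jb: "\<bar>j\<bar> \<le> int M" unfolding M_def by linarith
    have "\<bar>of_int i\<bar> \<le> B2" using PB[of n] i y by simp
    hence ib: "\<bar>i\<bar> \<le> int M" unfolding M_def by linarith
    have "j \<noteq> 0" using j I(1) Q' unfolding Qn_def by auto
    have "y = (of_int i / of_int j, of_int Q / of_int j)"
      using i j I(1) Q' \<open>j \<noteq> 0\<close> unfolding Qn_def Pn_def by (cases y) (simp add: field_simps)
    thus "y \<in> (\<lambda>(i, j). (of_int i / of_int j, of_int Q / of_int j)) ` ({- int M..int M} \<times> {- int M..int M})"
      using ib jb by (intro image_eqI[of _ _ "(i, j)"]) auto
  qed
  show ?thesis by (rule finite_subset[OF sub]) simp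
qed

end



lemma ult_periodic_intro:
  assumes nz: "\<And>n. snd (cf_alpha D R x n) \<noteq> 0"
    and eq: "cf_alpha D R x n0 = cf_alpha D R x m0" and lt: "n0 < m0"
    and rl: "\<And>j. R (n0 + j) = R (m0 + j)"
  shows "cf_ult_periodic D R x"
proof -
  have aj: "cf_alpha D R x (n0 + j) = cf_alpha D R x (m0 + j)" for j
  proof (induction j)
    case 0 thus ?case using eq by simp
  next
    case (Suc j)
    thus ?case using rl[of j] by (simp add: Let_def)
  qed
  have bj: "cf_b D R x (n0 + j) = cf_b D R x (m0 + j)" for j
    unfolding cf_b_def using aj[of j] rl[of j] by simp
  have per: "\<forall>n\<ge>n0. cf_b D R x (n + (m0 - n0)) = cf_b D R x n"
  proof (intro allI impI)
    fix n assume "n \<ge> n0"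
    then obtain j where j: "n = n0 + j" by (metis le_add_diff_inverse)
    have "n + (m0 - n0) = m0 + j" using j lt by simp
    hence "cf_b D R x (n + (m0 - n0)) = cf_b D R x (m0 + j)" by (rule arg_cong)
    thus "cf_b D R x (n + (m0 - n0)) = cf_b D R x n" using bj[of j] j by simp
  qed
  have "\<forall>n. cf_alpha D R x n \<noteq> (cf_b D R x n, 0)" using nz by (metis snd_conv)
  moreover have "m0 - n0 \<ge> 1" using lt by simp
  ultimately show ?thesis unfolding cf_ult_periodic_def using per by blast
qed

lemma not_inj_nat:
  assumes "finite (range f)" obtains n m :: nat where "n < m" "f n = f m"
proof -
  have "\<not> inj f" using assms finite_imageD[of f UNIV] by auto
  then obtain n m where "n \<noteq> m" "f n = f m" unfolding inj_def by blast
  thus ?thesis using that by (cases "n < m") (auto simp: not_less_iff_gr_or_eq)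
qed

context cfset begin

lemma sstep:
  assumes I: "Inv x" and ev: "ev_val p (qs_approx r x) v"
  defines "c \<equiv> s_bar p r x"
  shows "Inv (nxt x c) \<and> Pn (nxt x c) = (c - fst x) * Qn x \<and>
         Qn (nxt x c) = of_int D * of_int Q ^ 2 / Qn x - (c - fst x)^2 * Qn x \<and>
         (\<exists>v'. ev_val p (qs_approx r (nxt x c)) v' \<and> v' \<le> - 1) \<and> \<bar>c - fst x\<bar> \<le> 3/2"
proof -
  obtain h1: "\<forall>\<^sub>F m in sequentially. pdiv_ge p 1 (qs_approx r x m - c)"
    and h2: "\<exists>z. c = of_int z / of_nat p ^ nat (- v)" and h3: "\<bar>c - fst x\<bar> \<le> of_nat p / 2"
    using sbar_props[OF p23 cauchy_approx[OF pr cau] ev] unfolding c_def by blast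
  obtain z where z: "c = of_int z / of_nat p ^ nat (- v)" using h2 by blast
  have "\<bar>c - fst x\<bar> \<le> 3/2" using h3 p23 by auto
  thus ?thesis using step[OF I ev h1 _ z] by simp
qed

lemma tstep:
  assumes I: "Inv x" and ev: "ev_val p (qs_approx r x) v"
  defines "c \<equiv> t_bar p r x"
  shows "Inv (nxt x c) \<and> Pn (nxt x c) = (c - fst x) * Qn x \<and>
         Qn (nxt x c) = of_int D * of_int Q ^ 2 / Qn x - (c - fst x)^2 * Qn x \<and>
         (\<exists>v'. ev_val p (qs_approx r (nxt x c)) v' \<and> v' \<le> 0) \<and> \<bar>c - fst x\<bar> \<le> 1/2"
proof -
  obtain h1: "\<forall>\<^sub>F m in sequentially. pdiv_ge p 0 (qs_approx r x m - c)"
    and h2: "\<exists>z. c = of_int z / of_nat p ^ nat (- v)" and h3: "\<bar>c - fst x\<bar> \<le> 1 / 2"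
    using tbar_props[OF p23 cauchy_approx[OF pr cau] ev] unfolding c_def by blast
  obtain z where z: "c = of_int z / of_nat p ^ nat (- v)" using h2 by blast
  show ?thesis using step[OF I ev h1 _ z] h3 by simp
qed

lemma pval_of: "ev_val p (qs_approx r x) v \<Longrightarrow> padic_val p (qs_approx r x) = v"
  using s_props[OF p23 cauchy_approx[OF pr cau]] by blast

abbreviation x0 :: "int \<Rightarrow> qsqrt" where "x0 P \<equiv> (of_int P / of_int Q, 1 / of_int Q)"

lemma ev_init: "\<exists>v. ev_val p (qs_approx r (x0 P)) v"
  using ev_val_exists[OF p23 cau tend ns] Q0 by simp

lemma algB: "cf_ult_periodic D (ruleB p r) (x0 P)"
proof -
  define \<alpha> where "\<alpha> = cf_alpha D (ruleB p r) (x0 P)"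
  define bs where "bs = cf_b D (ruleB p r) (x0 P)"
  have bs_eq: "bs n = (if even n then s_bar p r (\<alpha> n) else t_bar p r (\<alpha> n))" for n
    unfolding bs_def \<alpha>_def cf_b_def ruleB_def ..
  have aS: "\<alpha> (Suc n) = nxt (\<alpha> n) (bs n)" for n unfolding \<alpha>_def bs_def by (rule alpha_Suc)
  have inv: "Inv (\<alpha> n) \<and> (\<exists>v. ev_val p (qs_approx r (\<alpha> n)) v)" for n
  proof (induction n)
    case 0 thus ?case unfolding \<alpha>_def using Inv_init ev_init by simp
  next
    case (Suc n)
    then obtain v where I: "Inv (\<alpha> n)" and v: "ev_val p (qs_approx r (\<alpha> n)) v" by blast
    show ?case
    proof (cases "even n")
      case True thus ?thesis using sstep[OF I v] unfolding aS bs_eq by auto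
    next
      case False thus ?thesis using tstep[OF I v] unfolding aS bs_eq by auto
    qed
  qed
  have props: "Pn (\<alpha> (Suc n)) = (bs n - fst (\<alpha> n)) * Qn (\<alpha> n) \<and>
      Qn (\<alpha> (Suc n)) = of_int D * of_int Q ^ 2 / Qn (\<alpha> n) - (bs n - fst (\<alpha> n))^2 * Qn (\<alpha> n) \<and>
      (even n \<longrightarrow> \<bar>bs n - fst (\<alpha> n)\<bar> \<le> 3/2) \<and> (\<not> even n \<longrightarrow> \<bar>bs n - fst (\<alpha> n)\<bar> \<le> 1/2)" for n
  proof -
    obtain v where I: "Inv (\<alpha> n)" and v: "ev_val p (qs_approx r (\<alpha> n)) v" using inv[of n] by blast
    show ?thesis
    proof (cases "even n")
      case True thus ?thesis using sstep[OF I v] unfolding aS bs_eq by auto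
    next
      case False thus ?thesis using tstep[OF I v] unfolding aS bs_eq by auto
    qed
  qed
  have fin: "finite (range \<alpha>)"
    by (rule states_finite[of \<alpha> "\<lambda>n. even n" bs]) (use inv props in auto)
  have "finite (range (\<lambda>n. (\<alpha> n, even n)))"
    by (rule finite_subset[of _ "range \<alpha> \<times> UNIV"]) (use fin in auto)
  then obtain n m where nm: "n < m" "(\<alpha> n, even n) = (\<alpha> m, even m)" by (rule not_inj_nat)
  show ?thesis
  proof (rule ult_periodic_intro[of D "ruleB p r" "x0 P" n m])
    show "\<And>k. snd (cf_alpha D (ruleB p r) (x0 P) k) \<noteq> 0" using inv unfolding \<alpha>_def Inv_def by blast
    show "cf_alpha D (ruleB p r) (x0 P) n = cf_alpha D (ruleB p r) (x0 P) m" using nm unfolding \<alpha>_def by simp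
    show "n < m" by fact
    show "ruleB p r (n + j) = ruleB p r (m + j)" for j
      using nm by (auto simp: ruleB_def fun_eq_iff)
  qed
qed

lemma algA: "cf_ult_periodic D (ruleA p r) (x0 P)"
proof -
  define \<alpha> where "\<alpha> = cf_alpha D (ruleA p r) (x0 P)"
  define bs where "bs = cf_b D (ruleA p r) (x0 P)"
  define S where "S n = (n = 0 \<or> padic_val p (qs_approx r (\<alpha> n)) = 0)" for n
  have aS: "\<alpha> (Suc n) = nxt (\<alpha> n) (bs n)" for n unfolding \<alpha>_def bs_def by (rule alpha_Suc)
  have inv: "Inv (\<alpha> n) \<and> (\<exists>v. ev_val p (qs_approx r (\<alpha> n)) v \<and> (n \<ge> 1 \<longrightarrow> v \<le> 0))" for n
  proof (induction n)
    case 0 thus ?case unfolding \<alpha>_def using Inv_init ev_init by simp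
  next
    case (Suc n)
    then obtain v where I: "Inv (\<alpha> n)" and v: "ev_val p (qs_approx r (\<alpha> n)) v" and vn: "n \<ge> 1 \<longrightarrow> v \<le> 0" by blast
    have pv: "padic_val p (qs_approx r (\<alpha> n)) = v" using pval_of[OF v] .
    show ?case
    proof (cases "S n")
      case True
      hence "bs n = s_bar p r (\<alpha> n)" unfolding bs_def cf_b_def ruleA_def S_def \<alpha>_def by auto
      thus ?thesis using sstep[OF I v] unfolding aS by force
    next
      case False
      hence "n \<ge> 1" "v \<noteq> 0" using pv unfolding S_def by auto
      hence "v < 0" using vn by simp
      hence "bs n = t_bar p r (\<alpha> n)" using False pv unfolding bs_def cf_b_def ruleA_def S_def \<alpha>_def by auto
      thus ?thesis using tstep[OF I v] unfolding aS by force
    qed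
  qed
  have props: "Pn (\<alpha> (Suc n)) = (bs n - fst (\<alpha> n)) * Qn (\<alpha> n) \<and>
      Qn (\<alpha> (Suc n)) = of_int D * of_int Q ^ 2 / Qn (\<alpha> n) - (bs n - fst (\<alpha> n))^2 * Qn (\<alpha> n) \<and>
      (S n \<longrightarrow> \<bar>bs n - fst (\<alpha> n)\<bar> \<le> 3/2 \<and> \<not> S (Suc n)) \<and> (\<not> S n \<longrightarrow> \<bar>bs n - fst (\<alpha> n)\<bar> \<le> 1/2)" for n
  proof -
    obtain v where I: "Inv (\<alpha> n)" and v: "ev_val p (qs_approx r (\<alpha> n)) v" and vn: "n \<ge> 1 \<longrightarrow> v \<le> 0"
      using inv[of n] by blast
    have pv: "padic_val p (qs_approx r (\<alpha> n)) = v" using pval_of[OF v] .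
    show ?thesis
    proof (cases "S n")
      case True
      hence b: "bs n = s_bar p r (\<alpha> n)" unfolding bs_def cf_b_def ruleA_def S_def \<alpha>_def by auto
      obtain v' where v': "ev_val p (qs_approx r (\<alpha> (Suc n))) v'" "v' \<le> -1"
        using sstep[OF I v] unfolding aS b by blast
      have "\<not> S (Suc n)" unfolding S_def using pval_of[OF v'(1)] v'(2) by simp
      thus ?thesis using sstep[OF I v] True unfolding aS b by auto
    next
      case False
      hence "n \<ge> 1" "v \<noteq> 0" using pv unfolding S_def by auto
      hence "v < 0" using vn by simp
      hence "bs n = t_bar p r (\<alpha> n)" using False pv unfolding bs_def cf_b_def ruleA_def S_def \<alpha>_def by auto
      thus ?thesis using tstep[OF I v] False unfolding aS by auto
    qed
  qed
  have fin: "finite (range \<alpha>)"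
    by (rule states_finite[of \<alpha> S bs]) (use inv props in auto)
  have "finite (range (\<lambda>n. \<alpha> (Suc n)))"
    by (rule finite_subset[of _ "range \<alpha>"]) (use fin in auto)
  then obtain n m where nm: "n < m" "\<alpha> (Suc n) = \<alpha> (Suc m)" by (rule not_inj_nat)
  show ?thesis
  proof (rule ult_periodic_intro[of D "ruleA p r" "x0 P" "Suc n" "Suc m"])
    show "\<And>k. snd (cf_alpha D (ruleA p r) (x0 P) k) \<noteq> 0" using inv unfolding \<alpha>_def Inv_def by blast
    show "cf_alpha D (ruleA p r) (x0 P) (Suc n) = cf_alpha D (ruleA p r) (x0 P) (Suc m)" using nm unfolding \<alpha>_def by simp
    show "Suc n < Suc m" using nm by simp
    show "ruleA p r (Suc n + j) = ruleA p r (Suc m + j)" for j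
      by (auto simp: ruleA_def fun_eq_iff)
  qed
qed

end

theorem theorem2:
  fixes p :: nat and P Q D :: int and r :: "nat \<Rightarrow> rat"
  assumes "p \<in> {2, 3}"
    and "Q \<noteq> 0"
    and "\<not> (\<exists>k::int. D = k^2)"
    and "padic_cauchy p r"
    and "padic_tendsto p (\<lambda>m. (r m)^2) (of_int D)"
  shows "cf_ult_periodic D (ruleA p r) (of_int P / of_int Q, 1 / of_int Q) \<and>
         cf_ult_periodic D (ruleB p r) (of_int P / of_int Q, 1 / of_int Q)"
proof -
  interpret cfset p r D Q
    by unfold_locales (use assms in auto)
  show ?thesis using algA algB by blast
qed

end
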